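(* Let $r\in(0,\infty)$, $k\ge1$ an integer, $p\in[1,\infty]$, and $u\in L_p([0,r])$. Assume that $D^ku=f_0+Df_1+\dots+D^{k-1}f_{k-1}$ in $(0,r)$ in the sense of distributions, where $f_j\in L_1([0,r])$ for $j=0,\dots,k-2$ and $f_{k-1}\in L_p([0,r])$. Then $Du\in L_p([0,r])$ and $$\|Du\|_{L_p([0,r])}\le N\|u\|_{L_1([0,r])}+N\|f_{k-1}\|_{L_p([0,r])}+N\sum_{j=0}^{k-2}\|f_j\|_{L_1([0,r])},$$ where $N=N(k,r)>0$.
   Context: $D$ denotes the derivative on the real line (in the distributional sense). *)

theory Defs
  imports "HOL-Analysis.Analysis" "HOL-Probability.Essential_Supremum"
begin

text \<open>Exponent p ranges over [1,\<infinity>], modelled as an ennreal with p \<ge> 1.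
  The measure space is Lebesgue measure on [0,r].\<close>

definition memLp :: "ennreal \<Rightarrow> real \<Rightarrow> (real \<Rightarrow> real) \<Rightarrow> bool" where
  "memLp p r f \<longleftrightarrow> f \<in> borel_measurable (lebesgue_on {0..r}) \<and>
     (if p = \<infinity> then (\<exists>C. AE x in lebesgue_on {0..r}. \<bar>f x\<bar> \<le> C)
      else integrable (lebesgue_on {0..r}) (\<lambda>x. \<bar>f x\<bar> powr enn2real p))"

definition Lp_norm :: "ennreal \<Rightarrow> real \<Rightarrow> (real \<Rightarrow> real) \<Rightarrow> real" where
  "Lp_norm p r f =
     (if p = \<infinity> then real_of_ereal (esssup (lebesgue_on {0..r}) (\<lambda>x. ereal \<bar>f x\<bar>))
      else (LINT x|lebesgue_on {0..r}. \<bar>f x\<bar> powr enn2real p) powr (1 / enn2real p))"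

text \<open>Test functions C_c^\<infinity>((0,r)): smooth on the real line, with support in a
  compact subinterval [a,b] of (0,r).\<close>

definition test_fun :: "real \<Rightarrow> (real \<Rightarrow> real) \<Rightarrow> bool" where
  "test_fun r \<phi> \<longleftrightarrow> (\<forall>n x. ((deriv ^^ n) \<phi>) differentiable (at x)) \<and>
     (\<exists>a b. 0 < a \<and> b < r \<and> (\<forall>x. x \<notin> {a..b} \<longrightarrow> \<phi> x = 0))"

end

theory Submission
  imports Defs
begin


coinductive smooth :: "(real \<Rightarrow> real) \<Rightarrow> bool" where
  smoothI: "(\<And>x. f differentiable (at x)) \<Longrightarrow> smooth (deriv f) \<Longrightarrow> smooth f"

lemma smooth_diff: "smooth f \<Longrightarrow> f differentiable (at x)"
  by (erule smooth.cases) auto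

lemma smooth_deriv: "smooth f \<Longrightarrow> smooth (deriv f)"
  by (erule smooth.cases) auto

lemma funpow_deriv_Suc: "(deriv ^^ Suc n) f = (deriv ^^ n) (deriv f)"
  by (simp add: funpow_Suc_right del: funpow.simps)

lemma smooth_funpow: "smooth f \<Longrightarrow> smooth ((deriv ^^ n) f)"
  by (induction n) (auto intro: smooth_deriv)

lemma smooth_iff: "smooth f \<longleftrightarrow> (\<forall>n x. ((deriv ^^ n) f) differentiable (at x))"
proof
  assume "smooth f" then show "\<forall>n x. ((deriv ^^ n) f) differentiable (at x)"
    by (auto intro: smooth_diff smooth_funpow)
next
  assume H: "\<forall>n x. ((deriv ^^ n) f) differentiable (at x)"
  have "\<exists>n. g = (deriv ^^ n) f \<Longrightarrow> smooth g" for g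
  proof (coinduction arbitrary: g rule: smooth.coinduct)
    case (smooth g)
    then obtain n where g: "g = (deriv ^^ n) f" by auto
    show ?case using H g by (auto intro!: exI[of _ "Suc n"])
  qed
  then show "smooth f" by (metis funpow_0)
qed

lemma deriv_eqI: "(\<And>x. (f has_real_derivative g x) (at x)) \<Longrightarrow> deriv f = g"
  by (rule ext) (rule DERIV_imp_deriv)

lemma diff_DERIV: "f differentiable (at x) \<Longrightarrow> (f has_real_derivative deriv f x) (at x)"
  using DERIV_deriv_iff_real_differentiable by blast

inductive alg :: "((real \<Rightarrow> real) \<Rightarrow> bool) \<Rightarrow> (real \<Rightarrow> real) \<Rightarrow> bool" for G where
  gen: "G g \<Longrightarrow> alg G g"
| const: "alg G (\<lambda>x. c)"
| add: "alg G f \<Longrightarrow> alg G g \<Longrightarrow> alg G (\<lambda>x. f x + g x)"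
| mult: "alg G f \<Longrightarrow> alg G g \<Longrightarrow> alg G (\<lambda>x. f x * g x)"

lemma alg_deriv:
  assumes G: "\<And>g. G g \<Longrightarrow> (\<forall>x. g differentiable (at x)) \<and> alg G (deriv g)"
  shows "alg G f \<Longrightarrow> (\<forall>x. f differentiable (at x)) \<and> alg G (deriv f)"
proof (induction rule: alg.induct)
  case (gen g) then show ?case using G by auto
next
  case (const c)
  have "deriv (\<lambda>x. c) = (\<lambda>x. 0)" by (rule deriv_eqI) auto
  then show ?case by (auto intro: alg.const)
next
  case (add f g)
  have "deriv (\<lambda>x. f x + g x) = (\<lambda>x. deriv f x + deriv g x)"
    by (rule deriv_eqI) (use add in \<open>blast intro: DERIV_add diff_DERIV\<close>)
  then show ?case using add by (auto intro: alg.add)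
next
  case (mult f g)
  have "deriv (\<lambda>x. f x * g x) = (\<lambda>x. deriv f x * g x + deriv g x * f x)"
    by (rule deriv_eqI) (use mult in \<open>blast intro: DERIV_mult diff_DERIV\<close>)
  then show ?case using mult by (auto intro: alg.intros)
qed

lemma alg_smooth:
  assumes G: "\<And>g. G g \<Longrightarrow> (\<forall>x. g differentiable (at x)) \<and> alg G (deriv g)"
  shows "alg G f \<Longrightarrow> smooth f"
proof (coinduction arbitrary: f rule: smooth.coinduct)
  case (smooth f)
  then show ?case using alg_deriv[OF G smooth] by blast
qed

lemma alg_smooth_smooth: "alg smooth f \<Longrightarrow> smooth f"
  by (rule alg_smooth) (auto intro: smooth_diff smooth_deriv alg.gen)

lemma smooth_add: "smooth f \<Longrightarrow> smooth g \<Longrightarrow> smooth (\<lambda>x. f x + g x)"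
  by (rule alg_smooth_smooth, rule alg.add, erule alg.gen, erule alg.gen)
lemma smooth_mult: "smooth f \<Longrightarrow> smooth g \<Longrightarrow> smooth (\<lambda>x. f x * g x)"
  by (rule alg_smooth_smooth, rule alg.mult, erule alg.gen, erule alg.gen)
lemma smooth_const: "smooth (\<lambda>x. c)"
  by (rule alg_smooth_smooth, rule alg.const)
lemma smooth_lin: "smooth f \<Longrightarrow> smooth g \<Longrightarrow> smooth (\<lambda>x. f x + c * g x)"
  by (rule smooth_add, assumption, rule smooth_mult[OF smooth_const])

lemma deriv_lin: "smooth f \<Longrightarrow> smooth g \<Longrightarrow> deriv (\<lambda>x. f x + c * g x) = (\<lambda>x. deriv f x + c * deriv g x)"
proof (rule deriv_eqI)
  fix x assume "smooth f" "smooth g"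
  then have "(f has_real_derivative deriv f x) (at x)" "(g has_real_derivative deriv g x) (at x)"
    by (auto intro: diff_DERIV smooth_diff)
  then show "((\<lambda>x. f x + c * g x) has_real_derivative deriv f x + c * deriv g x) (at x)"
    by (intro DERIV_add DERIV_cmult)
qed

lemma funpow_deriv_lin: "smooth f \<Longrightarrow> smooth g \<Longrightarrow>
  (deriv ^^ n) (\<lambda>x. f x + c * g x) = (\<lambda>x. (deriv ^^ n) f x + c * (deriv ^^ n) g x)"
proof (induction n arbitrary: f g)
  case 0 then show ?case by simp
next
  case (Suc n)
  show ?case unfolding funpow_deriv_Suc deriv_lin[OF Suc.prems]
    by (rule Suc.IH) (use Suc.prems in \<open>auto intro: smooth_deriv\<close>)
qed



definition eb :: "nat \<Rightarrow> real \<Rightarrow> real" where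
  "eb n t = (if t \<le> 0 then 0 else exp (- 1/t) / t^n)"

lemma eb_tendsto: "((\<lambda>t. exp (- 1/t) / t^n) \<longlongrightarrow> 0) (at_right (0::real))"
proof -
  have "((\<lambda>t. (inverse t) ^ n / exp (inverse t)) \<longlongrightarrow> 0) (at_right (0::real))"
    by (rule filterlim_compose[OF tendsto_power_div_exp_0 filterlim_inverse_at_top_right])
  moreover have "eventually (\<lambda>t. (inverse t) ^ n / exp (inverse t) = exp (- 1/t) / t^n) (at_right (0::real))"
    using eventually_at_right_less[of "0::real"] by eventually_elim (simp add: exp_minus power_inverse field_simps)
  ultimately show ?thesis by (rule tendsto_cong[THEN iffD1, rotated])
qed

lemma eb_deriv: "(eb n has_real_derivative (eb (n+2) t - n * eb (n+1) t)) (at t)"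
proof (cases "t > 0")
  case True
  have "((\<lambda>t. exp (- 1/t) / t^n) has_real_derivative (exp (- 1/t) / t^(n+2) - n * (exp (- 1/t) / t^(n+1)))) (at t)"
    using True
    apply (auto intro!: derivative_eq_intros simp: field_simps power_add power_Suc2 simp del: power_Suc)
    apply (cases n)
     apply auto
    done
  moreover have "eb (n+2) t - n * eb (n+1) t = exp (- 1/t) / t^(n+2) - n * (exp (- 1/t) / t^(n+1))"
    using True by (simp add: eb_def)
  ultimately have H: "((\<lambda>t. exp (- 1/t) / t^n) has_real_derivative (eb (n+2) t - n * eb (n+1) t)) (at t)"
    by simp
  show ?thesis
    by (rule has_field_derivative_transform_within_open[OF H, where S="{0<..}"])
       (use True in \<open>auto simp: eb_def\<close>)
next
  case False
  show ?thesis
  proof (cases "t < 0")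
    case True
    have "((\<lambda>t. 0) has_real_derivative 0) (at t)" by simp
    then have "(eb n has_real_derivative 0) (at t)"
      by (rule has_field_derivative_transform_within_open[where S="{..<0}"])
         (use True in \<open>auto simp: eb_def\<close>)
    then show ?thesis using True by (simp add: eb_def)
  next
    case False
    with \<open>\<not> t > 0\<close> have t: "t = 0" by simp
    have "((\<lambda>y. (eb n y - eb n 0) / (y - 0)) \<longlongrightarrow> 0) (at (0::real))"
    proof (rule filterlim_split_at)
      show "((\<lambda>y. (eb n y - eb n 0) / (y - 0)) \<longlongrightarrow> 0) (at_left (0::real))"
      proof (rule tendsto_eventually)
        have "eventually (\<lambda>y. y < 0) (at_left (0::real))" by (simp add: eventually_at_filter)
        then show "eventually (\<lambda>y. (eb n y - eb n 0) / (y - 0) = 0) (at_left (0::real))"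
          by eventually_elim (simp add: eb_def)
      qed
      have "eventually (\<lambda>y. exp (- 1/y) / y^(Suc n) = (eb n y - eb n 0) / (y - 0)) (at_right (0::real))"
        using eventually_at_right_less[of "0::real"] by eventually_elim (simp add: eb_def)
      then show "((\<lambda>y. (eb n y - eb n 0) / (y - 0)) \<longlongrightarrow> 0) (at_right (0::real))"
        by (rule tendsto_cong[THEN iffD1, OF _ eb_tendsto[of "Suc n"]])
    qed
    then have "(eb n has_real_derivative 0) (at 0)"
      by (simp add: has_field_derivative_iff)
    then show ?thesis using t by (simp add: eb_def)
  qed
qed

definition genG :: "(real \<Rightarrow> real) \<Rightarrow> bool" where
  "genG g \<longleftrightarrow> (\<exists>n s c. g = (\<lambda>x. eb n (s*x+c)))"

lemma genG_ok: "genG g \<Longrightarrow> (\<forall>x. g differentiable (at x)) \<and> alg genG (deriv g)"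
proof -
  assume "genG g"
  then obtain n s c where g: "g = (\<lambda>x. eb n (s*x+c))" by (auto simp: genG_def)
  have D: "(g has_real_derivative (s * eb (n+2) (s*x+c) + (- (s * n)) * eb (n+1) (s*x+c))) (at x)" for x
  proof -
    have "((\<lambda>x. eb n (s*x+c)) has_real_derivative (eb (n+2) (s*x+c) - n * eb (n+1) (s*x+c)) * s) (at x)"
      by (rule DERIV_chain2[OF eb_deriv]) (auto intro!: derivative_eq_intros)
    then show ?thesis unfolding g by (simp add: algebra_simps)
  qed
  then have "\<forall>x. g differentiable (at x)" using real_differentiable_def by blast
  moreover have "deriv g = (\<lambda>x. s * eb (n+2) (s*x+c) + (- (s * n)) * eb (n+1) (s*x+c))"
    by (rule deriv_eqI[OF D])
  moreover have "alg genG (\<lambda>x. s * eb (n+2) (s*x+c) + (- (s * n)) * eb (n+1) (s*x+c))"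
    by (rule alg.add; rule alg.mult; (rule alg.const | rule alg.gen)?) (auto simp: genG_def)
  ultimately show ?thesis by simp
qed

definition bump0 :: "real \<Rightarrow> real \<Rightarrow> real \<Rightarrow> real" where
  "bump0 a b x = eb 0 (x - a) * eb 0 (b - x)"

lemma smooth_bump0: "smooth (bump0 a b)"
proof -
  have g1: "genG (\<lambda>x. eb 0 (x - a))" unfolding genG_def
    by (rule exI[of _ 0], rule exI[of _ 1], rule exI[of _ "-a"]) simp
  have g2: "genG (\<lambda>x. eb 0 (b - x))" unfolding genG_def
    by (rule exI[of _ 0], rule exI[of _ "-1"], rule exI[of _ "b"]) simp
  have "smooth (\<lambda>x. eb 0 (x - a) * eb 0 (b - x))"
    by (rule alg_smooth[OF genG_ok alg.mult[OF alg.gen[where G=genG, OF g1] alg.gen[where G=genG, OF g2]]])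
  then show ?thesis unfolding bump0_def .
qed

lemma bump0_supp: "x \<notin> {a<..<b} \<Longrightarrow> bump0 a b x = 0"
  by (auto simp: bump0_def eb_def)

lemma bump0_pos: "x \<in> {a<..<b} \<Longrightarrow> bump0 a b x > 0"
  by (auto simp: bump0_def eb_def)

lemma bump0_nonneg: "bump0 a b x \<ge> 0"
  by (auto simp: bump0_def eb_def)



lemma test_fun_iff: "test_fun r \<phi> \<longleftrightarrow> smooth \<phi> \<and> (\<exists>a b. 0 < a \<and> b < r \<and> (\<forall>x. x \<notin> {a..b} \<longrightarrow> \<phi> x = 0))"
  unfolding test_fun_def smooth_iff by blast

lemma smooth_continuous: "smooth \<phi> \<Longrightarrow> continuous_on S \<phi>"
  by (meson continuous_at_imp_continuous_on differentiable_imp_continuous_within smooth_diff)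

lemma deriv_zero_outside:
  fixes \<phi> :: "real \<Rightarrow> real" and x :: real
  assumes z: "\<forall>x. x \<notin> {a..b} \<longrightarrow> \<phi> x = 0" and x: "x \<notin> {a..b}"
  shows "deriv \<phi> x = 0"
proof -
  have "((\<lambda>x. 0) has_real_derivative 0) (at x)" by simp
  moreover have "\<exists>S. open S \<and> x \<in> S \<and> (\<forall>y\<in>S. 0 = \<phi> y)"
  proof (cases "x < a")
    case True then show ?thesis using z by (intro exI[of _ "{..<a}"]) auto
  next
    case False then have "x > b" using x by auto
    then show ?thesis using z by (intro exI[of _ "{b<..}"]) auto
  qed
  ultimately have "(\<phi> has_real_derivative 0) (at x)"
    using has_field_derivative_transform_within_open by blast
  then show ?thesis by (rule DERIV_imp_deriv)
qed

lemma test_deriv: "test_fun r \<phi> \<Longrightarrow> test_fun r (deriv \<phi>)"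
  unfolding test_fun_iff using deriv_zero_outside smooth_deriv by blast

lemma test_funpow: "test_fun r \<phi> \<Longrightarrow> test_fun r ((deriv ^^ n) \<phi>)"
  by (induction n) (auto intro: test_deriv)

lemma test_lin: assumes "test_fun r \<phi>" "test_fun r \<psi>"
  shows "test_fun r (\<lambda>x. \<phi> x + c * \<psi> x)"
proof -
  obtain a b where ab: "0 < a" "b < r" "\<forall>x. x \<notin> {a..b} \<longrightarrow> \<phi> x = 0" and s1: "smooth \<phi>"
    using assms(1) unfolding test_fun_iff by blast
  obtain a' b' where ab': "0 < a'" "b' < r" "\<forall>x. x \<notin> {a'..b'} \<longrightarrow> \<psi> x = 0" and s2: "smooth \<psi>"
    using assms(2) unfolding test_fun_iff by blast
  show ?thesis unfolding test_fun_iff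
    apply (intro conjI smooth_lin s1 s2)
  proof (rule exI[of _ "min a a'"], rule exI[of _ "max b b'"], intro conjI allI impI)
    fix x assume "x \<notin> {min a a'..max b b'}"
    then have "x \<notin> {a..b}" "x \<notin> {a'..b'}" by auto
    then show "\<phi> x + c * \<psi> x = 0" using ab(3) ab'(3) by simp
  qed (use ab ab' in auto)
qed

lemma test_smooth: "test_fun r \<phi> \<Longrightarrow> smooth \<phi>"
  unfolding test_fun_iff by blast

lemma test_cont: "test_fun r \<phi> \<Longrightarrow> continuous_on S \<phi>"
  using smooth_continuous test_smooth by blast

lemma test_cont_pow: "test_fun r \<phi> \<Longrightarrow> continuous_on S ((deriv ^^ n) \<phi>)"
  using test_cont test_funpow by blast

lemma test_ends: "test_fun r \<phi> \<Longrightarrow> \<phi> 0 = 0 \<and> \<phi> r = 0"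
  unfolding test_fun_iff by force

lemma funpow_deriv_Suc': "(deriv ^^ Suc n) f = deriv ((deriv ^^ n) f)"
  by simp

section \<open>Integration basics on [0,r]\<close>

lemma cont_meas: fixes f :: "real \<Rightarrow> real" shows "continuous_on {0..r} f \<Longrightarrow> f \<in> borel_measurable (lebesgue_on {0..(r::real)})"
  by (rule continuous_imp_measurable_on_sets_lebesgue) auto

lemma cont_int: fixes f :: "real \<Rightarrow> real" shows "continuous_on {0..r} f \<Longrightarrow> integrable (lebesgue_on {0..(r::real)}) f"
  by (rule continuous_imp_integrable_real)

lemma cont_LINT: fixes f :: "real \<Rightarrow> real" shows "continuous_on {0..r} f \<Longrightarrow> (LINT x|lebesgue_on {0..(r::real)}. f x) = integral {0..r} f"
  by (rule lebesgue_integral_eq_integral) (auto intro: cont_int)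

lemma cont_bdd: "continuous_on {0..r} (f::real\<Rightarrow>real) \<Longrightarrow> \<exists>M. \<forall>x\<in>{0..r}. \<bar>f x\<bar> \<le> M"
proof -
  assume "continuous_on {0..r} f"
  then have "compact (f ` {0..r})" by (rule compact_continuous_image) auto
  then obtain M where "\<forall>y\<in>f ` {0..r}. norm y \<le> M" using compact_imp_bounded bounded_iff by metis
  then show ?thesis by auto
qed

lemma int_mult_bdd:
  fixes f g :: "real \<Rightarrow> real"
  assumes "integrable M f" "g \<in> borel_measurable M" "\<forall>x\<in>space M. \<bar>g x\<bar> \<le> B"
  shows "integrable M (\<lambda>x. f x * g x)"
proof (rule Bochner_Integration.integrable_bound[where f="\<lambda>x. B * f x"])
  show "integrable M (\<lambda>x. B * f x)" using assms(1) by simp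
  show "(\<lambda>x. f x * g x) \<in> borel_measurable M" using assms borel_measurable_integrable by measurable
  show "AE x in M. norm (f x * g x) \<le> norm (B * f x)"
  proof (rule AE_I2)
    fix x assume "x \<in> space M"
    then have "\<bar>g x\<bar> \<le> \<bar>B\<bar>" using assms(3) by force
    then have "\<bar>f x\<bar> * \<bar>g x\<bar> \<le> \<bar>f x\<bar> * \<bar>B\<bar>" by (rule mult_left_mono) auto
    then show "norm (f x * g x) \<le> norm (B * f x)"
      by (simp add: abs_mult mult.commute)
  qed
qed

lemma bdd_int:
  fixes g :: "real \<Rightarrow> real"
  assumes "r \<ge> 0" "g \<in> borel_measurable (lebesgue_on {0..(r::real)})" "\<forall>x\<in>{0..r}. \<bar>g x\<bar> \<le> B"
  shows "integrable (lebesgue_on {0..r}) g"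
proof -
  have "integrable (lebesgue_on {0..r}) (\<lambda>x. 1 * g x)"
    by (rule int_mult_bdd[OF cont_int]) (use assms in auto)
  then show ?thesis by simp
qed

section \<open>Integration by parts with test functions\<close>

lemma ibp:
  assumes r: "0 < r" and \<phi>: "test_fun r \<phi>"
    and w: "\<And>x. (w has_real_derivative w' x) (at x)" and cw': "continuous_on UNIV w'"
  shows "(LINT x|lebesgue_on {0..r}. deriv \<phi> x * w x) = - (LINT x|lebesgue_on {0..r}. \<phi> x * w' x)"
proof -
  have sm: "smooth \<phi>" using \<phi> test_smooth by blast
  have cd: "continuous_on S (deriv \<phi>)" for S using smooth_continuous smooth_deriv sm by blast
  have c\<phi>: "continuous_on S \<phi>" for S using smooth_continuous sm by blast
  have cw: "continuous_on S w" for S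
    using w by (meson DERIV_continuous continuous_at_imp_continuous_on)
  have c1: "continuous_on {0..r} (\<lambda>x. deriv \<phi> x * w x)"
    by (intro continuous_intros cd cw)
  have c2: "continuous_on {0..r} (\<lambda>x. \<phi> x * w' x)"
    by (intro continuous_intros c\<phi> continuous_on_subset[OF cw']) auto
  have D: "((\<lambda>x. \<phi> x * w x) has_vector_derivative (deriv \<phi> x * w x + \<phi> x * w' x)) (at x within {0..r})" for x
  proof -
    have "((\<lambda>x. \<phi> x * w x) has_real_derivative (deriv \<phi> x * w x + w' x * \<phi> x)) (at x)"
      by (rule DERIV_mult[OF diff_DERIV[OF smooth_diff[OF sm]] w])
    then show ?thesis
      by (simp add: has_real_derivative_iff_has_vector_derivative[symmetric] has_field_derivative_at_within mult.commute)
  qed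
  have "((\<lambda>x. deriv \<phi> x * w x + \<phi> x * w' x) has_integral (\<phi> r * w r - \<phi> 0 * w 0)) {0..r}"
    by (rule fundamental_theorem_of_calculus) (use r D in auto)
  then have "integral {0..r} (\<lambda>x. deriv \<phi> x * w x + \<phi> x * w' x) = 0"
    using test_ends[OF \<phi>] by (simp add: integral_unique)
  moreover have "integral {0..r} (\<lambda>x. deriv \<phi> x * w x + \<phi> x * w' x)
      = integral {0..r} (\<lambda>x. deriv \<phi> x * w x) + integral {0..r} (\<lambda>x. \<phi> x * w' x)"
    by (rule integral_add; rule integrable_continuous_interval; fact)
  ultimately show ?thesis using cont_LINT[OF c1] cont_LINT[OF c2] by simp
qed

lemma ibp_pow:
  assumes r: "0 < r" and \<phi>: "test_fun r \<phi>"
  shows "(LINT x|lebesgue_on {0..r}. deriv \<phi> x * x ^ Suc n) = - (Suc n) * (LINT x|lebesgue_on {0..r}. \<phi> x * x ^ n)"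
proof -
  have "(LINT x|lebesgue_on {0..r}. deriv \<phi> x * x ^ Suc n) = - (LINT x|lebesgue_on {0..r}. \<phi> x * (Suc n * x ^ n))"
    by (rule ibp[OF r \<phi>]) (use DERIV_pow[of "Suc n"] in \<open>auto intro!: continuous_intros\<close>)
  also have "(\<lambda>x::real. \<phi> x * (Suc n * x ^ n)) = (\<lambda>x::real. Suc n * (\<phi> x * x ^ n))"
    by (auto simp: mult_ac)
  also have "- (LINT x|lebesgue_on {0..r}. Suc n * (\<phi> x * x ^ n)) = - (Suc n) * (LINT x|lebesgue_on {0..r}. \<phi> x * x ^ n)"
    by (simp only: integral_mult_right_zero)
  finally show ?thesis .
qed

lemma ibp_1:
  assumes r: "0 < r" and \<phi>: "test_fun r \<phi>"
  shows "(LINT x|lebesgue_on {0..r}. deriv \<phi> x) = 0"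
proof -
  have "(LINT x|lebesgue_on {0..r}. deriv \<phi> x * 1) = - (LINT x|lebesgue_on {0..r}. \<phi> x * 0)"
    by (rule ibp[OF r \<phi>]) (auto intro!: derivative_eq_intros continuous_intros)
  then show ?thesis by simp
qed

lemma moments:
  assumes r: "0 < r" and ch: "test_fun r ch"
  shows "(LINT x|lebesgue_on {0..r}. (deriv ^^ j) ch x * x ^ j) = (-1) ^ j * fact j * (LINT x|lebesgue_on {0..r}. ch x)"
proof (induction j)
  case 0 then show ?case by simp
next
  case (Suc j)
  have "(LINT x|lebesgue_on {0..r}. (deriv ^^ Suc j) ch x * x ^ Suc j)
      = - (Suc j) * (LINT x|lebesgue_on {0..r}. (deriv ^^ j) ch x * x ^ j)"
    unfolding funpow_deriv_Suc' by (rule ibp_pow[OF r test_funpow[OF ch]])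
  also have "\<dots> = - (Suc j) * ((-1) ^ j * fact j * (LINT x|lebesgue_on {0..r}. ch x))"
    using Suc by simp
  also have "\<dots> = (-1) ^ Suc j * fact (Suc j) * (LINT x|lebesgue_on {0..r}. ch x)"
    by (simp add: algebra_simps)
  finally show ?case .
qed



lemma antideriv:
  assumes r: "0 < r" and \<psi>: "test_fun r \<psi>" and z: "(LINT x|lebesgue_on {0..r}. \<psi> x) = 0"
  shows "\<exists>\<Phi>. test_fun r \<Phi> \<and> deriv \<Phi> = \<psi>"
proof -
  obtain a b where ab: "0 < a" "b < r" and zo: "\<forall>x. x \<notin> {a..b} \<longrightarrow> \<psi> x = 0" and sm: "smooth \<psi>"
    using \<psi> unfolding test_fun_iff by blast
  have c\<psi>: "continuous_on S \<psi>" for S using smooth_continuous sm by blast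
  have iS: "\<psi> integrable_on {u..v}" for u v by (rule integrable_continuous_interval[OF c\<psi>])
  define \<Phi> where "\<Phi> = (\<lambda>x. integral {0..x} \<psi>)"
  have i0: "integral {u..v} \<psi> = 0" if "\<And>t. t \<in> {u..v} \<Longrightarrow> \<psi> t = 0" for u v
  proof -
    have "integral {u..v} \<psi> = integral {u..v} (\<lambda>_. 0::real)" by (rule integral_cong) (use that in auto)
    then show ?thesis by simp
  qed
  have Ir: "integral {0..r} \<psi> = 0" using z cont_LINT[OF c\<psi>] by simp
  have Z1: "\<Phi> y = 0" if "y < a" for y
    unfolding \<Phi>_def by (rule i0) (use that zo in auto)
  have Z2: "\<Phi> y = 0" if "y > b" for y
  proof (cases "y < a")
    case True then show ?thesis by (rule Z1)
  next
    case ya: False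
    show ?thesis
  proof (cases "y \<ge> r")
    case True
    have "integral {0..r} \<psi> + integral {r..y} \<psi> = integral {0..y} \<psi>"
      by (rule Henstock_Kurzweil_Integration.integral_combine) (use True r iS in auto)
    moreover have "integral {r..y} \<psi> = 0" by (rule i0) (use zo ab in auto)
    ultimately show ?thesis using Ir by (simp add: \<Phi>_def)
  next
    case False
    have "integral {0..y} \<psi> + integral {y..r} \<psi> = integral {0..r} \<psi>"
      by (rule Henstock_Kurzweil_Integration.integral_combine) (use False that ab ya iS in auto)
    moreover have "integral {y..r} \<psi> = 0" by (rule i0) (use zo that in auto)
    ultimately show ?thesis using Ir by (simp add: \<Phi>_def)
  qed
  qed
  have D: "(\<Phi> has_real_derivative \<psi> x) (at x)" for x
  proof (cases "x < a")
    case True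
    have "((\<lambda>x. 0) has_real_derivative 0) (at x)" by simp
    then have "(\<Phi> has_real_derivative 0) (at x)"
      by (rule has_field_derivative_transform_within_open[where S="{..<a}"]) (use True Z1 in auto)
    then show ?thesis using zo True by simp
  next
    case False
    show ?thesis
    proof (cases "x > b")
      case True
      have "((\<lambda>x. 0) has_real_derivative 0) (at x)" by simp
      then have "(\<Phi> has_real_derivative 0) (at x)"
        by (rule has_field_derivative_transform_within_open[where S="{b<..}"]) (use True Z2 in auto)
      then show ?thesis using zo True by simp
    next
      case False2: False
      then have x: "0 < x" "x < r" using False ab by auto
      have "(\<Phi> has_vector_derivative \<psi> x) (at x within {0..r})"
        unfolding \<Phi>_def by (rule integral_has_vector_derivative[OF c\<psi>]) (use x in auto)
      moreover have "at x within {0..r} = at x"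
        by (rule at_within_interior) (use x in auto)
      ultimately show ?thesis by (simp add: has_real_derivative_iff_has_vector_derivative)
    qed
  qed
  have dd: "deriv \<Phi> = \<psi>" by (rule deriv_eqI[OF D])
  have "smooth \<Phi>"
    by (rule smoothI) (use D dd sm real_differentiable_def in auto)
  moreover have "\<forall>x. x \<notin> {a..b} \<longrightarrow> \<Phi> x = 0"
    using Z1 Z2 by auto
  ultimately show ?thesis using ab dd unfolding test_fun_iff by blast
qed

lemma bump_exists:
  assumes r: "0 < r"
  shows "\<exists>\<theta>. test_fun r \<theta> \<and> (LINT x|lebesgue_on {0..r}. \<theta> x) = 1"
proof -
  define a where "a = r/4"
  define b where "b = 3*r/4"
  have ab: "0 < a" "b < r" "a < b" using r by (auto simp: a_def b_def)
  define c where "c = (LINT x|lebesgue_on {0..r}. bump0 a b x)"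
  have cb: "continuous_on S (bump0 a b)" for S using smooth_continuous smooth_bump0 by blast
  have "c \<ge> 0" unfolding c_def by (rule integral_nonneg_AE) (auto simp: bump0_nonneg)
  moreover have "c \<noteq> 0"
  proof
    assume "c = 0"
    then have "\<forall>x\<in>{0..r}. bump0 a b x = 0"
      using integralL_eq_0_iff[OF cb r] bump0_nonneg unfolding c_def by blast
    moreover have "bump0 a b ((a+b)/2) > 0" by (rule bump0_pos) (use ab in auto)
    ultimately show False using ab by force
  qed
  ultimately have c: "c > 0" by simp
  define \<theta> where "\<theta> = (\<lambda>x. (1/c) * bump0 a b x)"
  have "smooth \<theta>" unfolding \<theta>_def by (intro smooth_mult smooth_const smooth_bump0)
  moreover have "\<forall>x. x \<notin> {a..b} \<longrightarrow> \<theta> x = 0" unfolding \<theta>_def using bump0_supp by auto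
  ultimately have "test_fun r \<theta>" using ab unfolding test_fun_iff by blast
  moreover have "(LINT x|lebesgue_on {0..r}. \<theta> x) = 1"
    unfolding \<theta>_def using c by (simp add: c_def)
  ultimately show ?thesis by blast
qed



lemma meas_id: "(\<lambda>x. x) \<in> borel_measurable (lebesgue_on {0..(r::real)})"
  by (rule cont_meas) (rule continuous_on_id)

lemma finM: "finite_measure (lebesgue_on {0..(r::real)})"
  by (rule finite_measure_lebesgue_on) simp

lemma meas_K:
  fixes f g :: "real \<Rightarrow> real"
  assumes [measurable]: "f \<in> borel_measurable (lebesgue_on {0..r})" "g \<in> borel_measurable (lebesgue_on {0..r})"
  shows "(\<lambda>(x,t). indicator {..x} t * f t * g x) \<in> borel_measurable (lebesgue_on {0..r} \<Otimes>\<^sub>M lebesgue_on {0..(r::real)})"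
proof -
  have [measurable]: "(\<lambda>x. x) \<in> borel_measurable (lebesgue_on {0..(r::real)})" by (rule meas_id)
  have "(\<lambda>(x,t). indicator {..x} t * f t * g x) = (\<lambda>p. (if snd p \<le> fst p then 1 else 0) * f (snd p) * g (fst p))"
    by (auto simp: indicator_def fun_eq_iff)
  also have "\<dots> \<in> borel_measurable (lebesgue_on {0..r} \<Otimes>\<^sub>M lebesgue_on {0..(r::real)})"
    by measurable
  finally show ?thesis .
qed

definition antid :: "real \<Rightarrow> (real \<Rightarrow> real) \<Rightarrow> real \<Rightarrow> real" where
  "antid r f x = (LINT t|lebesgue_on {0..r}. indicator {..x} t * f t)"

lemma meas_ind: "(\<lambda>t. indicator {..x} t :: real) \<in> borel_measurable (lebesgue_on {0..(r::real)})"
proof -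
  have [measurable]: "(\<lambda>x. x) \<in> borel_measurable (lebesgue_on {0..(r::real)})" by (rule meas_id)
  have "(\<lambda>t. indicator {..x} t :: real) = (\<lambda>t. if t \<le> x then 1 else 0)" by (auto simp: indicator_def fun_eq_iff)
  also have "\<dots> \<in> borel_measurable (lebesgue_on {0..(r::real)})" by measurable
  finally show ?thesis .
qed

lemma int_ind:
  fixes f :: "real \<Rightarrow> real"
  assumes f: "integrable (lebesgue_on {0..r}) f"
  shows "integrable (lebesgue_on {0..r}) (\<lambda>t. indicator {..x} t * f t)"
proof -
  have "integrable (lebesgue_on {0..r}) (\<lambda>t. f t * indicator {..x} t)"
    by (rule int_mult_bdd[OF f meas_ind, where B=1]) (auto simp: indicator_def)
  then show ?thesis by (simp add: mult.commute)
qed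

lemma antid_bound:
  fixes f :: "real \<Rightarrow> real"
  assumes f: "integrable (lebesgue_on {0..r}) f"
  shows "\<bar>antid r f x\<bar> \<le> (LINT t|lebesgue_on {0..r}. \<bar>f t\<bar>)"
proof -
  have "\<bar>antid r f x\<bar> \<le> (LINT t|lebesgue_on {0..r}. \<bar>indicator {..x} t * f t\<bar>)"
    unfolding antid_def by (rule integral_abs_bound)
  also have "\<dots> \<le> (LINT t|lebesgue_on {0..r}. \<bar>f t\<bar>)"
    by (rule integral_mono) (use f int_ind[OF integrable_abs[OF f]] in \<open>auto simp: abs_mult indicator_def\<close>)
  finally show ?thesis .
qed

lemma antid_meas:
  fixes f :: "real \<Rightarrow> real"
  assumes f: "integrable (lebesgue_on {0..r}) f"
  shows "antid r f \<in> borel_measurable (lebesgue_on {0..r})"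
proof -
  interpret M: finite_measure "lebesgue_on {0..r}" by (rule finM)
  have fm[measurable]: "f \<in> borel_measurable (lebesgue_on {0..r})" using f by auto
  have "(\<lambda>(x,t). indicator {..x} t * f t * 1) \<in> borel_measurable (lebesgue_on {0..r} \<Otimes>\<^sub>M lebesgue_on {0..(r::real)})"
    by (rule meas_K) (auto simp: fm)
  then have "(\<lambda>(x,t). indicator {..x} t * f t) \<in> borel_measurable (lebesgue_on {0..r} \<Otimes>\<^sub>M lebesgue_on {0..(r::real)})"
    by simp
  then show ?thesis unfolding antid_def
    by (rule M.borel_measurable_lebesgue_integral[of "\<lambda>x t. indicator {..x} t * f t", simplified])
qed

lemma cont_LINT_gen: fixes g :: "real \<Rightarrow> real"
  shows "continuous_on {a..b} g \<Longrightarrow> (LINT x|lebesgue_on {a..b}. g x) = integral {a..b} g"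
  by (rule lebesgue_integral_eq_integral) (auto intro: continuous_imp_integrable_real)

lemma inner_FTC:
  assumes r: "0 < r" and \<phi>: "test_fun r \<phi>" and t: "t \<in> {0..r}"
  shows "(LINT x|lebesgue_on {0..r}. indicator {..x} t * deriv \<phi> x) = - \<phi> t"
proof -
  have sm: "smooth \<phi>" using \<phi> test_smooth by blast
  have cd: "continuous_on S (deriv \<phi>)" for S using smooth_continuous smooth_deriv sm by blast
  have "(LINT x|lebesgue_on {0..r}. indicator {..x} t * deriv \<phi> x)
      = (LINT x|lebesgue_on {0..r}. (if x \<in> {t..} then deriv \<phi> x else 0))"
    by (rule Bochner_Integration.integral_cong) (auto simp: indicator_def)
  also have "\<dots> = (LINT x|lebesgue_on ({t..} \<inter> {0..r}). deriv \<phi> x)"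
    by (rule Lebesgue_Measure.integral_restrict_Int) auto
  also have "{t..} \<inter> {0..r} = {t..r}" using t by auto
  also have "(LINT x|lebesgue_on {t..r}. deriv \<phi> x) = integral {t..r} (deriv \<phi>)"
    by (rule cont_LINT_gen[OF cd])
  also have "\<dots> = \<phi> r - \<phi> t"
  proof (rule integral_unique, rule fundamental_theorem_of_calculus)
    show "t \<le> r" using t by auto
    fix x
    show "(\<phi> has_vector_derivative deriv \<phi> x) (at x within {t..r})"
      using diff_DERIV[OF smooth_diff[OF sm]]
      by (simp add: has_real_derivative_iff_has_vector_derivative[symmetric] has_field_derivative_at_within)
  qed
  finally show ?thesis using test_ends[OF \<phi>] by simp
qed

lemma ibp_L1:
  fixes f :: "real \<Rightarrow> real"
  assumes r: "0 < r" and f: "integrable (lebesgue_on {0..r}) f" and \<phi>: "test_fun r \<phi>"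
  shows "(LINT x|lebesgue_on {0..r}. f x * \<phi> x) = - (LINT x|lebesgue_on {0..r}. antid r f x * deriv \<phi> x)"
proof -
  let ?M = "lebesgue_on {0..r}"
  interpret M: finite_measure ?M by (rule finM)
  interpret P: pair_sigma_finite ?M ?M by unfold_locales
  have fm[measurable]: "f \<in> borel_measurable ?M" using f by auto
  have sm: "smooth \<phi>" using \<phi> test_smooth by blast
  have cd: "continuous_on S (deriv \<phi>)" for S using smooth_continuous smooth_deriv sm by blast
  have dm[measurable]: "deriv \<phi> \<in> borel_measurable ?M" by (rule cont_meas[OF cd])
  obtain B where B: "\<forall>x\<in>{0..r}. \<bar>deriv \<phi> x\<bar> \<le> B" using cont_bdd[OF cd] by blast
  have B0: "0 \<le> B" using B r by force
  define K where "K = (\<lambda>x t. indicator {..x} t * f t * deriv \<phi> x)"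
  have Km: "(case_prod K) \<in> borel_measurable (?M \<Otimes>\<^sub>M ?M)"
    unfolding K_def by (rule meas_K[OF fm dm])
  have KI: "integrable (?M \<Otimes>\<^sub>M ?M) (case_prod K)"
  proof (rule P.Fubini_integrable[OF Km])
    have nm: "(\<lambda>x. LINT t|?M. norm (case_prod K (x, t))) \<in> borel_measurable ?M"
      using Km by measurable
    show "integrable ?M (\<lambda>x. LINT t|?M. norm (case_prod K (x, t)))"
    proof (rule bdd_int[OF _ nm])
      show "0 \<le> r" using r by simp
      show "\<forall>x\<in>{0..r}. \<bar>LINT t|?M. norm (case_prod K (x, t))\<bar> \<le> B * (LINT t|?M. \<bar>f t\<bar>)"
      proof
        fix x assume x: "x \<in> {0..r}"
        have "\<bar>LINT t|?M. norm (case_prod K (x, t))\<bar> = (LINT t|?M. norm (case_prod K (x, t)))"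
          by (rule abs_of_nonneg) (rule integral_nonneg_AE, auto)
        also have "\<dots> \<le> (LINT t|?M. B * \<bar>f t\<bar>)"
        proof (rule integral_mono)
          have "integrable ?M (\<lambda>t. (indicator {..x} t * \<bar>f t\<bar>) * \<bar>deriv \<phi> x\<bar>)"
            by (rule integrable_mult_left) (rule int_ind[OF integrable_abs[OF f]])
          moreover have "(\<lambda>t. norm (case_prod K (x, t))) = (\<lambda>t. (indicator {..x} t * \<bar>f t\<bar>) * \<bar>deriv \<phi> x\<bar>)"
            by (auto simp: K_def indicator_def abs_mult)
          ultimately show "integrable ?M (\<lambda>t. norm (case_prod K (x, t)))" by simp
          show "integrable ?M (\<lambda>t. B * \<bar>f t\<bar>)" using f by simp
          fix t
          have "\<bar>indicator {..x} t * f t * deriv \<phi> x\<bar> \<le> \<bar>f t\<bar> * B"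
            using B B0 x by (auto simp: indicator_def abs_mult intro!: mult_left_mono)
          then show "norm (case_prod K (x, t)) \<le> B * \<bar>f t\<bar>" by (simp add: K_def mult.commute)
        qed
        also have "\<dots> = B * (LINT t|?M. \<bar>f t\<bar>)" by simp
        finally show "\<bar>LINT t|?M. norm (case_prod K (x, t))\<bar> \<le> B * (LINT t|?M. \<bar>f t\<bar>)" .
      qed
    qed
    show "AE x in ?M. integrable ?M (\<lambda>t. case_prod K (x, t))"
      unfolding K_def using int_ind[OF f] by simp
  qed
  have "(LINT t|?M. (LINT x|?M. K x t)) = (LINT x|?M. (LINT t|?M. K x t))"
    by (rule P.Fubini_integral[OF KI])
  moreover have "(LINT x|?M. (LINT t|?M. K x t)) = (LINT x|?M. antid r f x * deriv \<phi> x)"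
    unfolding K_def antid_def by simp
  moreover have "(LINT t|?M. (LINT x|?M. K x t)) = (LINT t|?M. - (f t * \<phi> t))"
  proof (rule Bochner_Integration.integral_cong)
    fix t assume t: "t \<in> space ?M"
    have "(LINT x|?M. K x t) = f t * (LINT x|?M. indicator {..x} t * deriv \<phi> x)"
      unfolding K_def by (simp add: mult_ac)
    also have "\<dots> = - (f t * \<phi> t)" using inner_FTC[OF r \<phi>] t by simp
    finally show "(LINT x|?M. K x t) = - (f t * \<phi> t)" .
  qed simp
  ultimately show ?thesis by simp
qed



lemma LINT_const: "0 \<le> r \<Longrightarrow> (LINT x|lebesgue_on {0..r}. (c::real)) = c * r"
  by (subst cont_LINT) auto

lemma int_test:
  fixes f :: "real \<Rightarrow> real"
  assumes "integrable (lebesgue_on {0..r}) f" "test_fun r \<phi>"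
  shows "integrable (lebesgue_on {0..r}) (\<lambda>x. f x * (deriv ^^ n) \<phi> x)"
proof -
  have c: "continuous_on {0..r} ((deriv ^^ n) \<phi>)" by (rule test_cont_pow[OF assms(2)])
  obtain B where "\<forall>x\<in>{0..r}. \<bar>(deriv ^^ n) \<phi> x\<bar> \<le> B" using cont_bdd[OF c] by blast
  then show ?thesis by (intro int_mult_bdd[OF assms(1) cont_meas[OF c]]) auto
qed

lemma int_test0:
  fixes f :: "real \<Rightarrow> real"
  assumes "integrable (lebesgue_on {0..r}) f" "test_fun r \<phi>"
  shows "integrable (lebesgue_on {0..r}) (\<lambda>x. f x * \<phi> x)"
  using int_test[OF assms, of 0] by simp

lemma int_bound:
  fixes g h :: "real \<Rightarrow> real"
  assumes g: "integrable (lebesgue_on {0..r}) g" and h: "h \<in> borel_measurable (lebesgue_on {0..r})"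
    and hb: "\<forall>x\<in>{0..r}. \<bar>h x\<bar> \<le> Mh"
  shows "\<bar>LINT x|lebesgue_on {0..r}. g x * h x\<bar> \<le> Mh * (LINT x|lebesgue_on {0..r}. \<bar>g x\<bar>)"
proof -
  have "\<bar>LINT x|lebesgue_on {0..r}. g x * h x\<bar> \<le> (LINT x|lebesgue_on {0..r}. \<bar>g x * h x\<bar>)"
    by (rule integral_abs_bound)
  also have "\<dots> \<le> (LINT x|lebesgue_on {0..r}. Mh * \<bar>g x\<bar>)"
  proof (rule integral_mono)
    show "integrable (lebesgue_on {0..r}) (\<lambda>x. \<bar>g x * h x\<bar>)"
      using int_mult_bdd[OF g h, of Mh] hb by simp
    show "integrable (lebesgue_on {0..r}) (\<lambda>x. Mh * \<bar>g x\<bar>)" using g by simp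
    fix x assume "x \<in> space (lebesgue_on {0..r})"
    then have "\<bar>h x\<bar> \<le> Mh" using hb by auto
    then have "\<bar>g x\<bar> * \<bar>h x\<bar> \<le> \<bar>g x\<bar> * Mh" by (rule mult_left_mono) auto
    then show "\<bar>g x * h x\<bar> \<le> Mh * \<bar>g x\<bar>" by (simp add: abs_mult mult.commute)
  qed
  also have "\<dots> = Mh * (LINT x|lebesgue_on {0..r}. \<bar>g x\<bar>)" by simp
  finally show ?thesis .
qed

lemma L1_add_bdd:
  fixes f B :: "real \<Rightarrow> real"
  assumes r: "0 \<le> r" and f: "integrable (lebesgue_on {0..r}) f" and Bm: "B \<in> borel_measurable (lebesgue_on {0..r})"
    and Bb: "\<forall>x\<in>{0..r}. \<bar>B x\<bar> \<le> b"
  shows "integrable (lebesgue_on {0..r}) (\<lambda>x. f x + B x)"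
    "(LINT x|lebesgue_on {0..r}. \<bar>f x + B x\<bar>) \<le> (LINT x|lebesgue_on {0..r}. \<bar>f x\<bar>) + r * b"
proof -
  have Bi: "integrable (lebesgue_on {0..r}) B" by (rule bdd_int[OF r Bm Bb])
  show "integrable (lebesgue_on {0..r}) (\<lambda>x. f x + B x)" using f Bi by simp
  have "(LINT x|lebesgue_on {0..r}. \<bar>f x + B x\<bar>) \<le> (LINT x|lebesgue_on {0..r}. \<bar>f x\<bar> + b)"
  proof (rule integral_mono)
    fix x assume "x \<in> space (lebesgue_on {0..r})"
    then have "\<bar>B x\<bar> \<le> b" using Bb by auto
    then show "\<bar>f x + B x\<bar> \<le> \<bar>f x\<bar> + b" by (smt (verit) abs_triangle_ineq)
  qed (use f Bi r in \<open>auto intro: bdd_int\<close>)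
  also have "\<dots> = (LINT x|lebesgue_on {0..r}. \<bar>f x\<bar>) + (LINT x|lebesgue_on {0..r}. b)"
    by (rule Bochner_Integration.integral_add) (use f r in \<open>auto intro: bdd_int\<close>)
  also have "(LINT x|lebesgue_on {0..r}. b) = b * r" by (rule LINT_const[OF r])
  finally show "(LINT x|lebesgue_on {0..r}. \<bar>f x + B x\<bar>) \<le> (LINT x|lebesgue_on {0..r}. \<bar>f x\<bar>) + r * b"
    by (simp add: mult.commute)
qed

lemma L1_nonneg: "0 \<le> (LINT x|lebesgue_on {0..r}. \<bar>f x :: real\<bar>)"
  by (rule integral_nonneg_AE) auto

lemma absorb:
  fixes f :: "nat \<Rightarrow> real \<Rightarrow> real"
  assumes r: "0 < r"
  shows "(\<forall>j<m. integrable (lebesgue_on {0..r}) (f j)) \<Longrightarrow>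
    \<exists>G. G \<in> borel_measurable (lebesgue_on {0..r}) \<and>
      (\<forall>x\<in>{0..r}. \<bar>G x\<bar> \<le> (1+r)^m * (\<Sum>j<m. LINT x|lebesgue_on {0..r}. \<bar>f j x\<bar>)) \<and>
      (\<forall>\<phi>. test_fun r \<phi> \<longrightarrow>
        (\<Sum>j<Suc m. (-1)^j * (LINT x|lebesgue_on {0..r}. f j x * (deriv ^^ j) \<phi> x))
        = (-1)^m * ((LINT x|lebesgue_on {0..r}. f m x * (deriv ^^ m) \<phi> x)
                   + (LINT x|lebesgue_on {0..r}. G x * (deriv ^^ m) \<phi> x)))"
proof (induction m)
  case 0
  show ?case by (rule exI[of _ "\<lambda>x. 0"]) auto
next
  case (Suc m)
  let ?M = "lebesgue_on {0..r}"
  let ?S = "\<lambda>m. (\<Sum>j<m. LINT x|lebesgue_on {0..r}. \<bar>f j x\<bar>)"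
  from Suc.prems have "\<forall>j<m. integrable ?M (f j)" by auto
  from Suc.IH[OF this] obtain G where Gm: "G \<in> borel_measurable ?M"
    and Gb: "\<forall>x\<in>{0..r}. \<bar>G x\<bar> \<le> (1+r)^m * ?S m"
    and Geq: "\<forall>\<phi>. test_fun r \<phi> \<longrightarrow>
        (\<Sum>j<Suc m. (-1)^j * (LINT x|?M. f j x * (deriv ^^ j) \<phi> x))
        = (-1)^m * ((LINT x|?M. f m x * (deriv ^^ m) \<phi> x) + (LINT x|?M. G x * (deriv ^^ m) \<phi> x))"
    by blast
  have fm: "integrable ?M (f m)" using Suc.prems by auto
  define H where "H = (\<lambda>x. f m x + G x)"
  have Hi: "integrable ?M H" unfolding H_def by (rule L1_add_bdd(1)[OF _ fm Gm Gb]) (use r in auto)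
  have HL: "(LINT x|?M. \<bar>H x\<bar>) \<le> (LINT x|?M. \<bar>f m x\<bar>) + r * ((1+r)^m * ?S m)"
    unfolding H_def by (rule L1_add_bdd(2)[OF _ fm Gm Gb]) (use r in auto)
  have Gi: "integrable ?M G" by (rule bdd_int[OF _ Gm Gb]) (use r in auto)
  define G' where "G' = antid r H"
  have G'm: "G' \<in> borel_measurable ?M" unfolding G'_def by (rule antid_meas[OF Hi])
  have Sm: "0 \<le> ?S m" by (intro sum_nonneg L1_nonneg)
  have G'b: "\<bar>G' x\<bar> \<le> (1+r)^Suc m * ?S (Suc m)" for x
  proof -
    have "\<bar>G' x\<bar> \<le> (LINT x|?M. \<bar>H x\<bar>)" unfolding G'_def by (rule antid_bound[OF Hi])
    also have "\<dots> \<le> (LINT x|?M. \<bar>f m x\<bar>) + r * ((1+r)^m * ?S m)" by (rule HL)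
    also have "\<dots> \<le> (1+r)^Suc m * (LINT x|?M. \<bar>f m x\<bar>) + (1+r)^Suc m * ?S m"
    proof (rule add_mono)
      have "1 \<le> (1+r)^Suc m" using r by (intro one_le_power) auto
      then show "(LINT x|?M. \<bar>f m x\<bar>) \<le> (1+r)^Suc m * (LINT x|?M. \<bar>f m x\<bar>)"
        using mult_right_mono[OF \<open>1 \<le> (1+r)^Suc m\<close> L1_nonneg[of r "f m"]] by simp
      have "r * (1+r)^m \<le> (1+r)^Suc m" using r by (simp add: mult_right_mono)
      then show "r * ((1+r)^m * ?S m) \<le> (1+r)^Suc m * ?S m"
        using mult_right_mono[OF \<open>r * (1+r)^m \<le> (1+r)^Suc m\<close> Sm] by (simp add: mult.assoc)
    qed
    also have "\<dots> = (1+r)^Suc m * ?S (Suc m)" by (simp add: algebra_simps)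
    finally show ?thesis .
  qed
  show ?case
  proof (intro exI[of _ G'] conjI allI impI ballI)
    show "G' \<in> borel_measurable ?M" by (rule G'm)
    fix x show "\<bar>G' x\<bar> \<le> (1+r)^Suc m * ?S (Suc m)" by (rule G'b)
  next
    fix \<phi> assume \<phi>: "test_fun r \<phi>"
    have \<psi>: "test_fun r ((deriv ^^ m) \<phi>)" by (rule test_funpow[OF \<phi>])
    have "(LINT x|?M. f m x * (deriv ^^ m) \<phi> x) + (LINT x|?M. G x * (deriv ^^ m) \<phi> x)
        = (LINT x|?M. H x * (deriv ^^ m) \<phi> x)"
      unfolding H_def distrib_right
      by (rule Bochner_Integration.integral_add[symmetric]) (auto intro: int_test fm Gi \<phi>)
    also have "\<dots> = - (LINT x|?M. G' x * (deriv ^^ Suc m) \<phi> x)"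
      unfolding G'_def funpow_deriv_Suc' by (rule ibp_L1[OF r Hi \<psi>])
    finally have e: "(LINT x|?M. f m x * (deriv ^^ m) \<phi> x) + (LINT x|?M. G x * (deriv ^^ m) \<phi> x)
        = - (LINT x|?M. G' x * (deriv ^^ Suc m) \<phi> x)" .
    have "(\<Sum>j<Suc (Suc m). (-1)^j * (LINT x|?M. f j x * (deriv ^^ j) \<phi> x))
        = (\<Sum>j<Suc m. (-1)^j * (LINT x|?M. f j x * (deriv ^^ j) \<phi> x))
          + (-1)^Suc m * (LINT x|?M. f (Suc m) x * (deriv ^^ Suc m) \<phi> x)"
      by (rule sum.lessThan_Suc)
    also have "\<dots> = (-1)^m * (- (LINT x|?M. G' x * (deriv ^^ Suc m) \<phi> x))
          + (-1)^Suc m * (LINT x|?M. f (Suc m) x * (deriv ^^ Suc m) \<phi> x)"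
      using Geq \<phi> e by simp
    also have "\<dots> = (-1)^Suc m * ((LINT x|?M. f (Suc m) x * (deriv ^^ Suc m) \<phi> x)
                   + (LINT x|?M. G' x * (deriv ^^ Suc m) \<phi> x))"
      by (simp add: algebra_simps)
    finally show "(\<Sum>j<Suc (Suc m). (-1)^j * (LINT x|?M. f j x * (deriv ^^ j) \<phi> x))
        = (-1)^Suc m * ((LINT x|?M. f (Suc m) x * (deriv ^^ Suc m) \<phi> x)
                   + (LINT x|?M. G' x * (deriv ^^ Suc m) \<phi> x))" .
  qed
qed



lemma lin_int:
  fixes u a b :: "real \<Rightarrow> real"
  assumes "integrable M (\<lambda>x. u x * a x)" "integrable M (\<lambda>x. u x * b x)"
  shows "(LINT x|M. u x * (a x + c * b x)) = (LINT x|M. u x * a x) + c * (LINT x|M. u x * b x)"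
proof -
  have "(LINT x|M. u x * (a x + c * b x)) = (LINT x|M. u x * a x + c * (u x * b x))"
    by (simp add: algebra_simps)
  also have "\<dots> = (LINT x|M. u x * a x) + (LINT x|M. c * (u x * b x))"
    by (rule Bochner_Integration.integral_add) (use assms in auto)
  finally show ?thesis by simp
qed

lemma neg1_sq: "(-1::real)^n * (-1)^n = 1"
  by (simp add: power_mult_distrib[symmetric])

lemma lower_step:
  fixes u f B \<theta> :: "real \<Rightarrow> real" and n :: nat
  assumes r: "0 < r" and \<theta>: "test_fun r \<theta>" and I\<theta>: "(LINT x|lebesgue_on {0..r}. \<theta> x) = 1"
    and u: "integrable (lebesgue_on {0..r}) u" and f: "integrable (lebesgue_on {0..r}) f"
    and Bm: "B \<in> borel_measurable (lebesgue_on {0..r})" and Bb: "\<forall>x\<in>{0..r}. \<bar>B x\<bar> \<le> c * S"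
    and c0: "0 \<le> c"
    and S: "(LINT x|lebesgue_on {0..r}. \<bar>f x\<bar>) + (LINT x|lebesgue_on {0..r}. \<bar>u x\<bar>) \<le> S"
    and M1: "\<forall>x\<in>{0..r}. \<bar>(deriv ^^ n) \<theta> x\<bar> \<le> M\<theta>"
    and M2: "\<forall>x\<in>{0..r}. \<bar>(deriv ^^ Suc n) \<theta> x\<bar> \<le> M\<theta>"
    and hyp: "\<forall>\<phi>. test_fun r \<phi> \<longrightarrow> (LINT x|lebesgue_on {0..r}. u x * (deriv ^^ Suc (Suc n)) \<phi> x)
                 = - (LINT x|lebesgue_on {0..r}. (f x + B x) * (deriv ^^ Suc n) \<phi> x)"
  shows "\<exists>B'. B' \<in> borel_measurable (lebesgue_on {0..r}) \<and>
     (\<forall>x\<in>{0..r}. \<bar>B' x\<bar> \<le> (c + M\<theta> * (1+r)^n * (1 + r * c)) * S) \<and>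
     (\<forall>ch. test_fun r ch \<longrightarrow> (LINT x|lebesgue_on {0..r}. u x * (deriv ^^ Suc n) ch x)
                 = - (LINT x|lebesgue_on {0..r}. (f x + B' x) * (deriv ^^ n) ch x))"
proof -
  let ?M = "lebesgue_on {0..r}"
  let ?I = "\<lambda>g. LINT x|?M. g x"
  define w where "w = (\<lambda>x. f x + B x)"
  have wi: "integrable ?M w" unfolding w_def by (rule L1_add_bdd(1)[OF _ f Bm Bb]) (use r in auto)
  have wL: "(LINT x|?M. \<bar>w x\<bar>) \<le> (LINT x|?M. \<bar>f x\<bar>) + r * (c * S)"
    unfolding w_def by (rule L1_add_bdd(2)[OF _ f Bm Bb]) (use r in auto)
  have S0: "0 \<le> S" using S L1_nonneg[of r f] L1_nonneg[of r u] by linarith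
  have M0: "0 \<le> M\<theta>" using M1 r by force
  define K where "K = (LINT x|?M. w x * (deriv ^^ n) \<theta> x) + (LINT x|?M. u x * (deriv ^^ Suc n) \<theta> x)"
  define K' where "K' = - ((-1)^n / fact n) * K"
  define B' where "B' = (\<lambda>x. B x + K' * x ^ n)"
  have cpow: "continuous_on {0..r} (\<lambda>x::real. x ^ n)" by (intro continuous_intros)
  have B'm: "B' \<in> borel_measurable ?M"
    unfolding B'_def using Bm cont_meas[OF cpow] by measurable
  have Kb: "\<bar>K\<bar> \<le> M\<theta> * (1 + r * c) * S"
  proof -
    have "\<bar>K\<bar> \<le> \<bar>LINT x|?M. w x * (deriv ^^ n) \<theta> x\<bar> + \<bar>LINT x|?M. u x * (deriv ^^ Suc n) \<theta> x\<bar>"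
      unfolding K_def by (rule abs_triangle_ineq)
    also have "\<dots> \<le> M\<theta> * (LINT x|?M. \<bar>w x\<bar>) + M\<theta> * (LINT x|?M. \<bar>u x\<bar>)"
      by (intro add_mono int_bound wi u M1 M2 cont_meas test_cont_pow[OF \<theta>])
    also have "\<dots> \<le> M\<theta> * ((LINT x|?M. \<bar>f x\<bar>) + r * (c * S)) + M\<theta> * (LINT x|?M. \<bar>u x\<bar>)"
      using wL M0 by (intro add_mono mult_left_mono) auto
    also have "\<dots> = M\<theta> * (((LINT x|?M. \<bar>f x\<bar>) + (LINT x|?M. \<bar>u x\<bar>)) + r * c * S)"
      by (simp add: algebra_simps)
    also have "\<dots> \<le> M\<theta> * (S + r * c * S)"
      using S M0 r c0 by (intro mult_left_mono add_mono) auto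
    also have "\<dots> = M\<theta> * (1 + r * c) * S" by (simp add: algebra_simps)
    finally show ?thesis .
  qed
  have K'b: "\<bar>K'\<bar> \<le> \<bar>K\<bar>"
  proof -
    have "\<bar>K'\<bar> = \<bar>K\<bar> / fact n" by (simp add: K'_def abs_mult)
    also have "\<dots> \<le> \<bar>K\<bar>"
    proof -
      have f1: "1 \<le> (fact n :: real)" by simp
      show ?thesis using mult_left_mono[OF f1 abs_ge_zero[of K]] by (simp add: divide_le_eq)
    qed
    finally show ?thesis .
  qed
  have B'b: "\<bar>B' x\<bar> \<le> (c + M\<theta> * (1+r)^n * (1 + r * c)) * S" if x: "x \<in> {0..r}" for x
  proof -
    have xn: "\<bar>x ^ n\<bar> \<le> (1+r)^n" using x by (auto simp: abs_of_nonneg intro!: power_mono)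
    have "\<bar>B' x\<bar> \<le> \<bar>B x\<bar> + \<bar>K'\<bar> * \<bar>x ^ n\<bar>" unfolding B'_def by (metis abs_mult abs_triangle_ineq)
    also have "\<dots> \<le> c * S + (M\<theta> * (1 + r * c) * S) * (1+r)^n"
      using Bb x K'b Kb xn by (intro add_mono mult_mono) auto
    also have "\<dots> = (c + M\<theta> * (1+r)^n * (1 + r * c)) * S" by (simp add: algebra_simps)
    finally show ?thesis .
  qed
  have eq: "(LINT x|?M. u x * (deriv ^^ Suc n) ch x) = - (LINT x|?M. (f x + B' x) * (deriv ^^ n) ch x)"
    if ch: "test_fun r ch" for ch
  proof -
    define c0 where "c0 = ?I ch"
    define \<psi>0 where "\<psi>0 = (\<lambda>x. ch x + (- c0) * \<theta> x)"
    have \<psi>0t: "test_fun r \<psi>0" unfolding \<psi>0_def by (rule test_lin[OF ch \<theta>])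
    have "?I \<psi>0 = ?I ch + (- c0) * ?I \<theta>"
      unfolding \<psi>0_def
      by (subst Bochner_Integration.integral_add) (auto intro: cont_int test_cont ch \<theta>)
    then have I0: "?I \<psi>0 = 0" using I\<theta> by (simp add: c0_def)
    obtain \<Phi> where \<Phi>: "test_fun r \<Phi>" and d\<Phi>: "deriv \<Phi> = \<psi>0"
      using antideriv[OF r \<psi>0t I0] by blast
    have sch: "smooth ch" "smooth \<theta>" using ch \<theta> test_smooth by auto
    have D1: "(deriv ^^ Suc (Suc n)) \<Phi> = (\<lambda>x. (deriv ^^ Suc n) ch x + (- c0) * (deriv ^^ Suc n) \<theta> x)"
      unfolding funpow_deriv_Suc[of "Suc n"] d\<Phi> \<psi>0_def by (rule funpow_deriv_lin[OF sch])
    have D2: "(deriv ^^ Suc n) \<Phi> = (\<lambda>x. (deriv ^^ n) ch x + (- c0) * (deriv ^^ n) \<theta> x)"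
      unfolding funpow_deriv_Suc[of n] d\<Phi> \<psi>0_def by (rule funpow_deriv_lin[OF sch])
    define A1 where "A1 = (LINT x|?M. u x * (deriv ^^ Suc n) ch x)"
    define A2 where "A2 = (LINT x|?M. u x * (deriv ^^ Suc n) \<theta> x)"
    define W1 where "W1 = (LINT x|?M. w x * (deriv ^^ n) ch x)"
    define W2 where "W2 = (LINT x|?M. w x * (deriv ^^ n) \<theta> x)"
    define P where "P = (LINT x|?M. (deriv ^^ n) ch x * x ^ n)"
    have h: "(LINT x|?M. u x * (deriv ^^ Suc (Suc n)) \<Phi> x) = - (LINT x|?M. w x * (deriv ^^ Suc n) \<Phi> x)"
      using hyp \<Phi> unfolding w_def by blast
    have e1: "(LINT x|?M. u x * (deriv ^^ Suc (Suc n)) \<Phi> x) = A1 + (- c0) * A2"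
      unfolding D1 A1_def A2_def by (rule lin_int[OF int_test[OF u ch] int_test[OF u \<theta>]])
    have e2: "(LINT x|?M. w x * (deriv ^^ Suc n) \<Phi> x) = W1 + (- c0) * W2"
      unfolding D2 W1_def W2_def by (rule lin_int[OF int_test[OF wi ch] int_test[OF wi \<theta>]])
    have eP: "P = (-1)^n * fact n * c0" unfolding P_def c0_def by (rule moments[OF r ch])
    have KP: "K' * P = - (W2 + A2) * c0"
      using neg1_sq[of n] unfolding K'_def K_def eP W2_def A2_def
      by (simp add: field_simps)
    have "(LINT x|?M. (f x + B' x) * (deriv ^^ n) ch x) = (LINT x|?M. w x * (deriv ^^ n) ch x + K' * ((deriv ^^ n) ch x * x ^ n))"
      by (simp add: B'_def w_def algebra_simps)
    also have "\<dots> = W1 + K' * P"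
    proof -
      have i2: "integrable ?M (\<lambda>x. K' * ((deriv ^^ n) ch x * x ^ n))"
        by (intro integrable_mult_right cont_int continuous_intros test_cont_pow[OF ch])
      show ?thesis unfolding W1_def P_def
        by (simp add: Bochner_Integration.integral_add[OF int_test[OF wi ch] i2])
    qed
    finally have e3: "(LINT x|?M. (f x + B' x) * (deriv ^^ n) ch x) = W1 + K' * P" .
    show ?thesis using h e1 e2 e3 KP unfolding A1_def[symmetric] by (simp add: algebra_simps)
  qed
  show ?thesis using B'm B'b eq by blast
qed



lemma lower_iter:
  fixes u f \<theta> :: "real \<Rightarrow> real" and k :: nat
  assumes r: "0 < r" and \<theta>: "test_fun r \<theta>" and I\<theta>: "(LINT x|lebesgue_on {0..r}. \<theta> x) = 1"
    and u: "integrable (lebesgue_on {0..r}) u" and f: "integrable (lebesgue_on {0..r}) f"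
    and S: "(LINT x|lebesgue_on {0..r}. \<bar>f x\<bar>) + (LINT x|lebesgue_on {0..r}. \<bar>u x\<bar>) \<le> S"
    and M\<theta>: "\<forall>j\<le>k. \<forall>x\<in>{0..r}. \<bar>(deriv ^^ j) \<theta> x\<bar> \<le> M\<theta>"
  shows "n < k \<Longrightarrow> 0 \<le> c \<Longrightarrow> B \<in> borel_measurable (lebesgue_on {0..r}) \<Longrightarrow>
    (\<forall>x\<in>{0..r}. \<bar>B x\<bar> \<le> c * S) \<Longrightarrow>
    (\<forall>\<phi>. test_fun r \<phi> \<longrightarrow> (LINT x|lebesgue_on {0..r}. u x * (deriv ^^ Suc n) \<phi> x)
                 = - (LINT x|lebesgue_on {0..r}. (f x + B x) * (deriv ^^ n) \<phi> x)) \<Longrightarrow>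
    \<exists>B'. B' \<in> borel_measurable (lebesgue_on {0..r}) \<and>
      (\<forall>x\<in>{0..r}. \<bar>B' x\<bar> \<le> ((\<lambda>c. c + M\<theta> * (1+r)^k * (1 + r * c)) ^^ n) c * S) \<and>
      (\<forall>\<phi>. test_fun r \<phi> \<longrightarrow> (LINT x|lebesgue_on {0..r}. u x * deriv \<phi> x)
                 = - (LINT x|lebesgue_on {0..r}. (f x + B' x) * \<phi> x))"
proof (induction n arbitrary: c B)
  case 0
  then show ?case by (intro exI[of _ B]) auto
next
  case (Suc n)
  let ?st = "\<lambda>c. c + M\<theta> * (1+r)^k * (1 + r * c)"
  have M1: "\<forall>x\<in>{0..r}. \<bar>(deriv ^^ n) \<theta> x\<bar> \<le> M\<theta>" using M\<theta> Suc.prems(1) by auto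
  have M2: "\<forall>x\<in>{0..r}. \<bar>(deriv ^^ Suc n) \<theta> x\<bar> \<le> M\<theta>"
    using M\<theta> Suc.prems(1) Suc_leI less_imp_le by blast
  obtain B2 where B2m: "B2 \<in> borel_measurable (lebesgue_on {0..r})"
    and B2b: "\<forall>x\<in>{0..r}. \<bar>B2 x\<bar> \<le> (c + M\<theta> * (1+r)^n * (1 + r * c)) * S"
    and B2e: "\<forall>ch. test_fun r ch \<longrightarrow> (LINT x|lebesgue_on {0..r}. u x * (deriv ^^ Suc n) ch x)
                 = - (LINT x|lebesgue_on {0..r}. (f x + B2 x) * (deriv ^^ n) ch x)"
    using lower_step[OF r \<theta> I\<theta> u f Suc.prems(3) Suc.prems(4) Suc.prems(2) S M1 M2 Suc.prems(5)] by blast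
  have S0: "0 \<le> S" using S L1_nonneg[of r f] L1_nonneg[of r u] by linarith
  have M0: "0 \<le> M\<theta>" using M\<theta> r by force
  have "(1+r)^n \<le> (1+r)^k" using Suc.prems(1) r by (intro power_increasing) auto
  then have "M\<theta> * (1+r)^n * (1 + r * c) \<le> M\<theta> * (1+r)^k * (1 + r * c)"
    using M0 r Suc.prems(2) by (intro mult_right_mono mult_left_mono) auto
  then have "(c + M\<theta> * (1+r)^n * (1 + r * c)) * S \<le> ?st c * S"
    using S0 by (intro mult_right_mono) auto
  then have B2b': "\<forall>x\<in>{0..r}. \<bar>B2 x\<bar> \<le> ?st c * S" using B2b by (meson order_trans)
  have st0: "0 \<le> ?st c" using M0 r Suc.prems(2) by auto
  from Suc.IH[OF _ st0 B2m B2b' B2e] Suc.prems(1)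
  show ?case by (simp add: funpow_Suc_right del: funpow.simps)
qed



lemma AE_False_lebesgue_on:
  fixes r :: real
  assumes r: "0 < r" and ae: "AE x in lebesgue_on {0..r}. False"
  shows False
proof -
  have a10: "AE x in lebesgue_on {0..r}. (1::real) = 0" using eventually_mono[OF ae] by auto
  have "(LINT x|lebesgue_on {0..r}. (1::real)) = (LINT x|lebesgue_on {0..r}. 0)"
    by (rule integral_cong_AE) (use a10 in auto)
  then show False using LINT_const[of r 1] r by simp
qed

lemma esssup_nonneg:
  fixes r :: real and F :: "real \<Rightarrow> real"
  assumes r: "0 < r"
  shows "0 \<le> esssup (lebesgue_on {0..r}) (\<lambda>x. ereal \<bar>F x\<bar>)"
proof (rule ccontr)
  assume "\<not> 0 \<le> esssup (lebesgue_on {0..r}) (\<lambda>x. ereal \<bar>F x\<bar>)"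
  then have neg: "esssup (lebesgue_on {0..r}) (\<lambda>x. ereal \<bar>F x\<bar>) < 0" by simp
  have "AE x in lebesgue_on {0..r}. ereal \<bar>F x\<bar> \<le> esssup (lebesgue_on {0..r}) (\<lambda>x. ereal \<bar>F x\<bar>)"
    by (rule esssup_AE)
  then have "AE x in lebesgue_on {0..r}. False"
  proof (rule eventually_mono)
    fix x assume "ereal \<bar>F x\<bar> \<le> esssup (lebesgue_on {0..r}) (\<lambda>x. ereal \<bar>F x\<bar>)"
    moreover have "(0::ereal) \<le> ereal \<bar>F x\<bar>" by simp
    ultimately show False using neg by (meson leD order_trans)
  qed
  then show False by (rule AE_False_lebesgue_on[OF r])
qed

lemma Lp_norm_nonneg:
  fixes r :: real and F :: "real \<Rightarrow> real"
  assumes r: "0 < r"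
  shows "0 \<le> Lp_norm p r F"
  unfolding Lp_norm_def using esssup_nonneg[OF r, of F] by (auto simp: real_of_ereal_pos)

lemma Lp_norm_1: "Lp_norm 1 r F = (LINT x|lebesgue_on {0..r}. \<bar>F x\<bar>)"
proof -
  have "(LINT x|lebesgue_on {0..r}. \<bar>F x\<bar> powr 1) = (LINT x|lebesgue_on {0..r}. \<bar>F x\<bar>)"
    by (rule Bochner_Integration.integral_cong) auto
  then show ?thesis unfolding Lp_norm_def using L1_nonneg[of r F] by simp
qed

lemma memLp_1: "memLp 1 r F \<Longrightarrow> integrable (lebesgue_on {0..r}) F"
proof -
  assume "memLp 1 r F"
  then have m: "F \<in> borel_measurable (lebesgue_on {0..r})"
    and i: "integrable (lebesgue_on {0..r}) (\<lambda>x. \<bar>F x\<bar> powr 1)"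
    unfolding memLp_def by auto
  have "integrable (lebesgue_on {0..r}) (\<lambda>x. \<bar>F x\<bar>)" using i by simp
  then show ?thesis using m by (simp add: integrable_abs_iff)
qed

lemma p_cases:
  assumes "1 \<le> (p::ennreal)" "p \<noteq> \<infinity>"
  shows "p = ennreal (enn2real p)" "1 \<le> enn2real p"
proof -
  obtain q where q: "p = ennreal q" "0 \<le> q" using assms(2) by (cases p) auto
  show "p = ennreal (enn2real p)" using q by simp
  show "1 \<le> enn2real p" using assms(1) q by simp
qed



lemma memLp_int:
  fixes r :: real and F :: "real \<Rightarrow> real"
  assumes r: "0 < r" and p: "1 \<le> p" and m: "memLp p r F"
  shows "integrable (lebesgue_on {0..r}) F"
proof (cases "p = \<infinity>")
  case True
  then obtain C where Fm: "F \<in> borel_measurable (lebesgue_on {0..r})"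
    and C: "AE x in lebesgue_on {0..r}. \<bar>F x\<bar> \<le> C" using m unfolding memLp_def by auto
  show ?thesis
  proof (rule Bochner_Integration.integrable_bound[where f="\<lambda>x. C"])
    show "integrable (lebesgue_on {0..r}) (\<lambda>x. C)" by (rule cont_int) auto
    show "F \<in> borel_measurable (lebesgue_on {0..r})" by (rule Fm)
    show "AE x in lebesgue_on {0..r}. norm (F x) \<le> norm C"
      using C by (rule eventually_mono) auto
  qed
next
  case False
  define q where "q = enn2real p"
  have q1: "1 \<le> q" unfolding q_def using p_cases[OF p False] by simp
  have Fm: "F \<in> borel_measurable (lebesgue_on {0..r})"
    and Fi: "integrable (lebesgue_on {0..r}) (\<lambda>x. \<bar>F x\<bar> powr q)"
    using m False unfolding memLp_def q_def by auto
  show ?thesis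
  proof (rule Bochner_Integration.integrable_bound[where f="\<lambda>x. 1 + \<bar>F x\<bar> powr q"])
    show "integrable (lebesgue_on {0..r}) (\<lambda>x. 1 + \<bar>F x\<bar> powr q)"
      by (rule Bochner_Integration.integrable_add[OF cont_int Fi]) auto
    show "F \<in> borel_measurable (lebesgue_on {0..r})" by (rule Fm)
    show "AE x in lebesgue_on {0..r}. norm (F x) \<le> norm (1 + \<bar>F x\<bar> powr q)"
    proof (rule AE_I2)
      fix x
      have "\<bar>F x\<bar> \<le> 1 + \<bar>F x\<bar> powr q"
      proof (cases "\<bar>F x\<bar> \<le> 1")
        case True then show ?thesis using powr_ge_zero[of "\<bar>F x\<bar>" q] by linarith
      next
        case False
        then have "\<bar>F x\<bar> powr 1 \<le> \<bar>F x\<bar> powr q" by (intro powr_mono q1) auto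
        then show ?thesis by simp
      qed
      then show "norm (F x) \<le> norm (1 + \<bar>F x\<bar> powr q)" by simp
    qed
  qed
qed

lemma esssup_fin:
  fixes r :: real and F :: "real \<Rightarrow> real"
  assumes r: "0 < r" and Fm: "F \<in> borel_measurable (lebesgue_on {0..r})"
    and C: "AE x in lebesgue_on {0..r}. \<bar>F x\<bar> \<le> C"
  shows "esssup (lebesgue_on {0..r}) (\<lambda>x. ereal \<bar>F x\<bar>) = ereal (Lp_norm \<infinity> r F)"
    "AE x in lebesgue_on {0..r}. \<bar>F x\<bar> \<le> Lp_norm \<infinity> r F"
proof -
  let ?E = "esssup (lebesgue_on {0..r}) (\<lambda>x. ereal \<bar>F x\<bar>)"
  have E0: "0 \<le> ?E" by (rule esssup_nonneg[OF r])
  have "?E \<le> ereal C"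
    by (rule esssup_I) (use Fm C in \<open>auto elim: eventually_mono\<close>)
  then obtain e where e: "?E = ereal e" using E0 by (cases ?E) auto
  then show E: "?E = ereal (Lp_norm \<infinity> r F)" by (simp add: Lp_norm_def)
  have "AE x in lebesgue_on {0..r}. ereal \<bar>F x\<bar> \<le> ?E" by (rule esssup_AE)
  then show "AE x in lebesgue_on {0..r}. \<bar>F x\<bar> \<le> Lp_norm \<infinity> r F"
    by (rule eventually_mono) (simp add: E)
qed

lemma L1_le_Lp:
  fixes r :: real and F :: "real \<Rightarrow> real"
  assumes r: "0 < r" and p: "1 \<le> p" and m: "memLp p r F"
  shows "(LINT x|lebesgue_on {0..r}. \<bar>F x\<bar>) \<le> (1 + r) * Lp_norm p r F"
proof (cases "p = \<infinity>")
  case True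
  then obtain C where Fm: "F \<in> borel_measurable (lebesgue_on {0..r})"
    and C: "AE x in lebesgue_on {0..r}. \<bar>F x\<bar> \<le> C" using m unfolding memLp_def by auto
  have Fi: "integrable (lebesgue_on {0..r}) F" by (rule memLp_int[OF r p m])
  let ?e = "Lp_norm \<infinity> r F"
  have "(LINT x|lebesgue_on {0..r}. \<bar>F x\<bar>) \<le> (LINT x|lebesgue_on {0..r}. ?e)"
    by (rule integral_mono_AE) (use Fi esssup_fin(2)[OF r Fm C] in \<open>auto intro: cont_int\<close>)
  also have "\<dots> = ?e * r" by (rule LINT_const) (use r in auto)
  also have "\<dots> \<le> (1 + r) * ?e" using Lp_norm_nonneg[OF r, of \<infinity> F] by (simp add: algebra_simps)
  finally show ?thesis using True by simp
next
  case False
  define q where "q = enn2real p"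
  have q1: "1 \<le> q" unfolding q_def using p_cases[OF p False] by simp
  have Fm: "F \<in> borel_measurable (lebesgue_on {0..r})"
    and Fi: "integrable (lebesgue_on {0..r}) (\<lambda>x. \<bar>F x\<bar> powr q)"
    using m False unfolding memLp_def q_def by auto
  have F1: "integrable (lebesgue_on {0..r}) F" by (rule memLp_int[OF r p m])
  define X where "X = (LINT x|lebesgue_on {0..r}. \<bar>F x\<bar> powr q)"
  define lam where "lam = X powr (1/q)"
  have X0: "0 \<le> X" unfolding X_def by (rule integral_nonneg_AE) auto
  have N: "Lp_norm p r F = lam" using False unfolding Lp_norm_def lam_def X_def q_def by simp
  show ?thesis
  proof (cases "lam = 0")
    case True
    then have "X = 0" unfolding lam_def by simp
    then have "AE x in lebesgue_on {0..r}. \<bar>F x\<bar> powr q = 0"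
      using integral_nonneg_eq_0_iff_AE[OF Fi] unfolding X_def by auto
    then have "AE x in lebesgue_on {0..r}. \<bar>F x\<bar> = 0"
      by (rule eventually_mono) simp
    then have "(LINT x|lebesgue_on {0..r}. \<bar>F x\<bar>) = (LINT x|lebesgue_on {0..r}. 0)"
      by (intro integral_cong_AE) (use Fm in auto)
    then show ?thesis using N True by simp
  next
    case False
    have l0: "0 < lam" using False unfolding lam_def by simp
    have pw: "\<bar>F x\<bar> \<le> lam + \<bar>F x\<bar> powr q / lam powr (q - 1)" for x
    proof (cases "\<bar>F x\<bar> \<le> lam")
      case True then show ?thesis
        by (metis add_increasing2 divide_nonneg_nonneg powr_ge_zero)
    next
      case False
      then have "lam powr (q - 1) \<le> \<bar>F x\<bar> powr (q - 1)" using q1 l0 by (intro powr_mono2) auto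
      then have "\<bar>F x\<bar> * lam powr (q - 1) \<le> \<bar>F x\<bar> * \<bar>F x\<bar> powr (q - 1)"
        by (intro mult_left_mono) auto
      also have "\<bar>F x\<bar> * \<bar>F x\<bar> powr (q - 1) = \<bar>F x\<bar> powr q"
        using False l0 by (simp add: powr_mult_base)
      finally have "\<bar>F x\<bar> \<le> \<bar>F x\<bar> powr q / lam powr (q - 1)"
        using l0 by (simp add: pos_le_divide_eq)
      then show ?thesis using l0 by linarith
    qed
    have "(LINT x|lebesgue_on {0..r}. \<bar>F x\<bar>) \<le> (LINT x|lebesgue_on {0..r}. lam + \<bar>F x\<bar> powr q / lam powr (q - 1))"
      by (rule integral_mono) (use F1 Fi pw in \<open>auto intro!: Bochner_Integration.integrable_add cont_int\<close>)
    also have "\<dots> = lam * r + X / lam powr (q - 1)"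
    proof -
      have "(LINT x|lebesgue_on {0..r}. lam + \<bar>F x\<bar> powr q / lam powr (q - 1))
          = (LINT x|lebesgue_on {0..r}. lam) + (LINT x|lebesgue_on {0..r}. \<bar>F x\<bar> powr q / lam powr (q - 1))"
        by (rule Bochner_Integration.integral_add) (use Fi in \<open>auto intro: cont_int\<close>)
      also have "(LINT x|lebesgue_on {0..r}. lam) = lam * r" by (rule LINT_const) (use r in auto)
      also have "(LINT x|lebesgue_on {0..r}. \<bar>F x\<bar> powr q / lam powr (q - 1)) = X / lam powr (q - 1)"
        unfolding X_def by simp
      finally show ?thesis .
    qed
    also have "X / lam powr (q - 1) = lam"
    proof -
      have "lam powr q = X" unfolding lam_def using q1 X0 by (simp add: powr_powr)
      then have "X / lam powr (q - 1) = lam powr q / lam powr (q - 1)" by simp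
      also have "\<dots> = lam powr (q - (q - 1))" by (simp add: powr_diff)
      finally show ?thesis using l0 by simp
    qed
    finally show ?thesis using N by (simp add: algebra_simps)
  qed
qed



lemma powr_sum_le:
  fixes X Z s :: real
  assumes "0 \<le> X" "0 \<le> Z" "0 \<le> s" "s \<le> 1"
  shows "(X + Z) powr s \<le> 2 * (X powr s + Z powr s)"
proof -
  have two: "(2::real) powr s \<le> 2"
    using powr_mono[of s 1 2] assms by simp
  have key: "(X + Z) powr s \<le> 2 * W powr s" if "X \<le> W" "Z \<le> W" "0 \<le> W" for W
  proof -
    have "(X + Z) powr s \<le> (2 * W) powr s" using that assms by (intro powr_mono2) auto
    also have "\<dots> = 2 powr s * W powr s" by (simp add: powr_mult)
    also have "\<dots> \<le> 2 * W powr s" using two by (intro mult_right_mono) auto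
    finally show ?thesis .
  qed
  show ?thesis
  proof (cases "X \<le> Z")
    case True
    then have "(X + Z) powr s \<le> 2 * Z powr s" using key[of Z] assms by auto
    moreover have "0 \<le> 2 * X powr s" by simp
    ultimately show ?thesis by (simp only: distrib_left)
  next
    case False
    then have "(X + Z) powr s \<le> 2 * X powr s" using key[of X] assms by auto
    moreover have "0 \<le> 2 * Z powr s" by simp
    ultimately show ?thesis by (simp only: distrib_left)
  qed
qed

lemma root_le: fixes r s :: real assumes "0 \<le> r" "0 \<le> s" "s \<le> 1" shows "r powr s \<le> 1 + r"
proof (cases "r \<le> 1")
  case True
  then have "r powr s \<le> 1" using assms by (intro powr_le1) auto
  then show ?thesis using assms by linarith
next
  case False
  then have "r powr s \<le> r powr 1" using assms by (intro powr_mono) auto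
  then show ?thesis using assms by simp
qed

lemma Lp_add_bdd:
  fixes r :: real and F B :: "real \<Rightarrow> real"
  assumes r: "0 < r" and p: "1 \<le> p" and m: "memLp p r F"
    and Bm: "B \<in> borel_measurable (lebesgue_on {0..r})" and Bb: "\<forall>x\<in>{0..r}. \<bar>B x\<bar> \<le> b"
  shows "memLp p r (\<lambda>x. F x + B x) \<and> Lp_norm p r (\<lambda>x. F x + B x) \<le> 4 * Lp_norm p r F + 4 * (1 + r) * b"
proof -
  have b0: "0 \<le> b" using Bb r by force
  have Fm: "F \<in> borel_measurable (lebesgue_on {0..r})" using m unfolding memLp_def by auto
  have FBm: "(\<lambda>x. F x + B x) \<in> borel_measurable (lebesgue_on {0..r})" using Fm Bm by measurable
  have AEB: "AE x in lebesgue_on {0..r}. \<bar>B x\<bar> \<le> b" using Bb by (intro AE_I2) auto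
  show ?thesis
  proof (cases "p = \<infinity>")
    case True
    then obtain C where C: "AE x in lebesgue_on {0..r}. \<bar>F x\<bar> \<le> C" using m unfolding memLp_def by auto
    let ?e = "Lp_norm \<infinity> r F"
    have e0: "0 \<le> ?e" by (rule Lp_norm_nonneg[OF r])
    have AEF: "AE x in lebesgue_on {0..r}. \<bar>F x\<bar> \<le> ?e" by (rule esssup_fin(2)[OF r Fm C])
    have AEFB: "AE x in lebesgue_on {0..r}. \<bar>F x + B x\<bar> \<le> ?e + b"
      using AEF AEB by eventually_elim (smt (verit))
    have mem: "memLp p r (\<lambda>x. F x + B x)" unfolding memLp_def using True FBm AEFB by auto
    have "esssup (lebesgue_on {0..r}) (\<lambda>x. ereal \<bar>F x + B x\<bar>) = ereal (Lp_norm \<infinity> r (\<lambda>x. F x + B x))"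
      by (rule esssup_fin(1)[OF r FBm AEFB])
    moreover have "esssup (lebesgue_on {0..r}) (\<lambda>x. ereal \<bar>F x + B x\<bar>) \<le> ereal (?e + b)"
      by (rule esssup_I) (use FBm AEFB in \<open>auto elim: eventually_mono\<close>)
    ultimately have "Lp_norm \<infinity> r (\<lambda>x. F x + B x) \<le> ?e + b" by simp
    also have "\<dots> \<le> 4 * ?e + 4 * (1 + r) * b" using e0 b0 r by (simp add: algebra_simps)
    finally show ?thesis using mem True by simp
  next
    case False
    define q where "q = enn2real p"
    have q1: "1 \<le> q" unfolding q_def using p_cases[OF p False] by simp
    have Fi: "integrable (lebesgue_on {0..r}) (\<lambda>x. \<bar>F x\<bar> powr q)"
      using m False unfolding memLp_def q_def by auto
    define X where "X = (LINT x|lebesgue_on {0..r}. \<bar>F x\<bar> powr q)"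
    have X0: "0 \<le> X" unfolding X_def by (rule integral_nonneg_AE) auto
    have pw: "\<bar>F x + B x\<bar> powr q \<le> 2 powr q * (\<bar>F x\<bar> powr q + b powr q)" if x: "x \<in> {0..r}" for x
    proof -
      have "\<bar>F x + B x\<bar> \<le> 2 * max \<bar>F x\<bar> b" using Bb x by (smt (verit))
      then have "\<bar>F x + B x\<bar> powr q \<le> (2 * max \<bar>F x\<bar> b) powr q" using q1 by (intro powr_mono2) auto
      also have "\<dots> = 2 powr q * max \<bar>F x\<bar> b powr q" using b0 by (simp add: powr_mult)
      also have "max \<bar>F x\<bar> b powr q \<le> \<bar>F x\<bar> powr q + b powr q"
        by (cases "\<bar>F x\<bar> \<le> b") (auto simp: max_def)
      then have "2 powr q * max \<bar>F x\<bar> b powr q \<le> 2 powr q * (\<bar>F x\<bar> powr q + b powr q)"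
        by (intro mult_left_mono) auto
      finally show ?thesis .
    qed
    have Gi: "integrable (lebesgue_on {0..r}) (\<lambda>x. 2 powr q * (\<bar>F x\<bar> powr q + b powr q))"
      by (intro integrable_mult_right Bochner_Integration.integrable_add[OF Fi cont_int]) auto
    have FBi: "integrable (lebesgue_on {0..r}) (\<lambda>x. \<bar>F x + B x\<bar> powr q)"
    proof (rule Bochner_Integration.integrable_bound[OF Gi])
      show "(\<lambda>x. \<bar>F x + B x\<bar> powr q) \<in> borel_measurable (lebesgue_on {0..r})" using FBm by measurable
      show "AE x in lebesgue_on {0..r}. norm (\<bar>F x + B x\<bar> powr q) \<le> norm (2 powr q * (\<bar>F x\<bar> powr q + b powr q))"
        using pw by (intro AE_I2) auto
    qed
    have mem: "memLp p r (\<lambda>x. F x + B x)" unfolding memLp_def using False FBm FBi q_def by auto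
    define Y where "Y = (LINT x|lebesgue_on {0..r}. \<bar>F x + B x\<bar> powr q)"
    have Y0: "0 \<le> Y" unfolding Y_def by (rule integral_nonneg_AE) auto
    have "Y \<le> (LINT x|lebesgue_on {0..r}. 2 powr q * (\<bar>F x\<bar> powr q + b powr q))"
      unfolding Y_def by (rule integral_mono[OF FBi Gi]) (use pw in auto)
    also have "\<dots> = 2 powr q * (X + b powr q * r)"
    proof -
      have "(LINT x|lebesgue_on {0..r}. \<bar>F x\<bar> powr q + b powr q)
          = X + (LINT x|lebesgue_on {0..r}. b powr q)"
        unfolding X_def by (rule Bochner_Integration.integral_add[OF Fi cont_int]) auto
      also have "(LINT x|lebesgue_on {0..r}. b powr q) = b powr q * r" by (rule LINT_const) (use r in auto)
      finally show ?thesis by simp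
    qed
    finally have YX: "Y \<le> 2 powr q * (X + r * b powr q)" by (simp add: mult.commute)
    have N1: "Lp_norm p r (\<lambda>x. F x + B x) = Y powr (1/q)"
      using False unfolding Lp_norm_def Y_def q_def by simp
    have N2: "Lp_norm p r F = X powr (1/q)"
      using False unfolding Lp_norm_def X_def q_def by simp
    have "Y powr (1/q) \<le> (2 powr q * (X + r * b powr q)) powr (1/q)"
      using YX Y0 q1 by (intro powr_mono2) auto
    also have "\<dots> = 2 * (X + r * b powr q) powr (1/q)"
      using q1 by (simp add: powr_mult powr_powr)
    also have "(X + r * b powr q) powr (1/q) \<le> 2 * (X powr (1/q) + (r * b powr q) powr (1/q))"
      using X0 r q1 by (intro powr_sum_le) auto
    also have "(r * b powr q) powr (1/q) = r powr (1/q) * b"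
      using q1 b0 by (simp add: powr_mult powr_powr)
    also have "r powr (1/q) * b \<le> (1 + r) * b"
      using root_le[of r "1/q"] r q1 b0 by (intro mult_right_mono) auto
    finally have "Y powr (1/q) \<le> 2 * (2 * (X powr (1/q) + (1 + r) * b))"
      by (simp add: mult_left_mono)
    then show ?thesis using mem N1 N2 by (simp add: algebra_simps)
  qed
qed



lemma theta_bound:
  fixes \<theta> :: "real \<Rightarrow> real"
  assumes "test_fun r \<theta>"
  shows "\<exists>M. \<forall>j\<le>k. \<forall>x\<in>{0..r}. \<bar>(deriv ^^ j) \<theta> x\<bar> \<le> M"
proof -
  have "\<forall>j. \<exists>M. \<forall>x\<in>{0..r}. \<bar>(deriv ^^ j) \<theta> x\<bar> \<le> M"
    using cont_bdd[OF test_cont_pow[OF assms]] by blast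
  then obtain Mf where Mf: "\<forall>j. \<forall>x\<in>{0..r}. \<bar>(deriv ^^ j) \<theta> x\<bar> \<le> Mf j" by metis
  have "\<forall>j\<le>k. \<forall>x\<in>{0..r}. \<bar>(deriv ^^ j) \<theta> x\<bar> \<le> (\<Sum>i\<le>k. \<bar>Mf i\<bar>)"
  proof (intro allI impI ballI)
    fix j x assume j: "j \<le> k" and x: "x \<in> {0..r}"
    have "\<bar>(deriv ^^ j) \<theta> x\<bar> \<le> Mf j" using Mf x by blast
    also have "Mf j \<le> \<bar>Mf j\<bar>" by (rule abs_ge_self)
    also have "\<dots> \<le> (\<Sum>i\<le>k. \<bar>Mf i\<bar>)" by (rule member_le_sum) (use j in auto)
    finally show "\<bar>(deriv ^^ j) \<theta> x\<bar> \<le> (\<Sum>i\<le>k. \<bar>Mf i\<bar>)" .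
  qed
  then show ?thesis by blast
qed

lemma funpow_nonneg: "0 \<le> M \<Longrightarrow> 0 \<le> r \<Longrightarrow> 0 \<le> c \<Longrightarrow> 0 \<le> ((\<lambda>c. c + M * (1+r)^k * (1 + r * c)) ^^ n) (c::real)"
  by (induction n) auto

theorem lemma4p3:
  fixes r :: real and k :: nat
  assumes "0 < r" and "1 \<le> k"
  shows "\<exists>N>0. \<forall>(p::ennreal) (u::real \<Rightarrow> real) (f::nat \<Rightarrow> real \<Rightarrow> real).
    1 \<le> p \<longrightarrow> memLp p r u \<longrightarrow>
    (\<forall>j < k - 1. memLp 1 r (f j)) \<longrightarrow> memLp p r (f (k - 1)) \<longrightarrow>
    (\<forall>\<phi>. test_fun r \<phi> \<longrightarrow>
        (-1) ^ k * (LINT x|lebesgue_on {0..r}. u x * (deriv ^^ k) \<phi> x) =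
        (\<Sum>j<k. (-1) ^ j * (LINT x|lebesgue_on {0..r}. f j x * (deriv ^^ j) \<phi> x))) \<longrightarrow>
    (\<exists>g. memLp p r g \<and>
       (\<forall>\<phi>. test_fun r \<phi> \<longrightarrow>
          - (LINT x|lebesgue_on {0..r}. u x * deriv \<phi> x) = (LINT x|lebesgue_on {0..r}. g x * \<phi> x)) \<and>
       Lp_norm p r g \<le> N * Lp_norm 1 r u + N * Lp_norm p r (f (k - 1))
                        + N * (\<Sum>j<k - 1. Lp_norm 1 r (f j)))"
proof -
  have r: "0 < r" and k1: "1 \<le> k" by fact+
  obtain \<theta> where \<theta>: "test_fun r \<theta>" and I\<theta>: "(LINT x|lebesgue_on {0..r}. \<theta> x) = 1"
    using bump_exists[OF r] by blast
  obtain M\<theta> where M\<theta>: "\<forall>j\<le>k. \<forall>x\<in>{0..r}. \<bar>(deriv ^^ j) \<theta> x\<bar> \<le> M\<theta>"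
    using theta_bound[OF \<theta>] by blast
  have M0: "0 \<le> M\<theta>" using M\<theta> r by force
  define st where "st = (\<lambda>c. c + M\<theta> * (1+r)^k * (1 + r * c))"
  define Cst where "Cst = (st ^^ (k - 1)) ((1+r)^k)"
  have C0: "0 \<le> Cst" unfolding Cst_def st_def by (rule funpow_nonneg) (use M0 r in auto)
  define N where "N = 4 + 4 * (1+r)^2 * Cst"
  have N0: "N > 0" unfolding N_def using C0 r by (simp add: add_pos_nonneg)
  show ?thesis
  proof (rule exI[of _ N], intro conjI N0 allI impI)
    fix p :: ennreal and u :: "real \<Rightarrow> real" and f :: "nat \<Rightarrow> real \<Rightarrow> real"
    assume p: "1 \<le> p" and mu: "memLp p r u" and mf: "\<forall>j<k - 1. memLp 1 r (f j)"
      and mF: "memLp p r (f (k - 1))"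
      and hyp: "\<forall>\<phi>. test_fun r \<phi> \<longrightarrow>
        (-1) ^ k * (LINT x|lebesgue_on {0..r}. u x * (deriv ^^ k) \<phi> x) =
        (\<Sum>j<k. (-1) ^ j * (LINT x|lebesgue_on {0..r}. f j x * (deriv ^^ j) \<phi> x))"
    let ?M = "lebesgue_on {0..r}"
    define F where "F = f (k - 1)"
    define T where "T = (\<Sum>j<k - 1. LINT x|?M. \<bar>f j x\<bar>)"
    define S where "S = (LINT x|?M. \<bar>F x\<bar>) + (LINT x|?M. \<bar>u x\<bar>) + T"
    have ui: "integrable ?M u" by (rule memLp_int[OF r p mu])
    have Fi: "integrable ?M F" unfolding F_def by (rule memLp_int[OF r p mF])
    have fi: "\<forall>j<k - 1. integrable ?M (f j)" using mf memLp_1 by blast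
    have T0: "0 \<le> T" unfolding T_def by (intro sum_nonneg L1_nonneg)
    have S0: "0 \<le> S" unfolding S_def using T0 L1_nonneg[of r F] L1_nonneg[of r u] by linarith
    obtain G where Gm: "G \<in> borel_measurable ?M"
      and Gb: "\<forall>x\<in>{0..r}. \<bar>G x\<bar> \<le> (1+r)^(k-1) * T"
      and Geq: "\<forall>\<phi>. test_fun r \<phi> \<longrightarrow>
        (\<Sum>j<Suc (k-1). (-1)^j * (LINT x|?M. f j x * (deriv ^^ j) \<phi> x))
        = (-1)^(k-1) * ((LINT x|?M. f (k-1) x * (deriv ^^ (k-1)) \<phi> x)
                   + (LINT x|?M. G x * (deriv ^^ (k-1)) \<phi> x))"
      using absorb[OF r fi] unfolding T_def by blast
    have kk: "Suc (k - 1) = k" using k1 by simp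
    have Gi: "integrable ?M G" by (rule bdd_int[OF _ Gm Gb]) (use r in auto)
    have Gb': "\<forall>x\<in>{0..r}. \<bar>G x\<bar> \<le> (1+r)^k * S"
    proof
      fix x assume x: "x \<in> {0..r}"
      have "(1+r)^(k-1) \<le> (1+r)^k" using r by (intro power_increasing) auto
      moreover have "T \<le> S" unfolding S_def using L1_nonneg[of r F] L1_nonneg[of r u] by linarith
      ultimately have "(1+r)^(k-1) * T \<le> (1+r)^k * S" using T0 r by (intro mult_mono) auto
      then show "\<bar>G x\<bar> \<le> (1+r)^k * S" using Gb x by force
    qed
    have red: "\<forall>\<phi>. test_fun r \<phi> \<longrightarrow> (LINT x|?M. u x * (deriv ^^ Suc (k-1)) \<phi> x)
                 = - (LINT x|?M. (F x + G x) * (deriv ^^ (k-1)) \<phi> x)"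
    proof (intro allI impI)
      fix \<phi> assume \<phi>: "test_fun r \<phi>"
      define A where "A = (LINT x|?M. u x * (deriv ^^ k) \<phi> x)"
      define Z where "Z = (LINT x|?M. (F x + G x) * (deriv ^^ (k-1)) \<phi> x)"
      have Zs: "Z = (LINT x|?M. F x * (deriv ^^ (k-1)) \<phi> x) + (LINT x|?M. G x * (deriv ^^ (k-1)) \<phi> x)"
        unfolding Z_def distrib_right
        by (rule Bochner_Integration.integral_add[OF int_test[OF Fi \<phi>] int_test[OF Gi \<phi>]])
      have "(-1)^k * A = (-1)^(k-1) * Z"
        using hyp \<phi> Geq unfolding A_def Zs F_def kk by simp
      moreover have "(-1::real)^k = - ((-1)^(k-1))"
        using k1 by (metis kk power_Suc mult_minus1)
      ultimately have "- ((-1)^(k-1) * A) = (-1)^(k-1) * Z" by simp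
      then have "(-1)^(k-1) * (A + Z) = (0::real)" by (simp add: algebra_simps)
      then have "A = - Z" by simp
      then show "(LINT x|?M. u x * (deriv ^^ Suc (k-1)) \<phi> x) = - (LINT x|?M. (F x + G x) * (deriv ^^ (k-1)) \<phi> x)"
        unfolding A_def Z_def kk .
    qed
    have SF: "(LINT x|?M. \<bar>F x\<bar>) + (LINT x|?M. \<bar>u x\<bar>) \<le> S" unfolding S_def using T0 by simp
    have c0: "0 \<le> (1+r)^k" using r by simp
    obtain B' where B'm: "B' \<in> borel_measurable ?M"
      and B'b: "\<forall>x\<in>{0..r}. \<bar>B' x\<bar> \<le> (st ^^ (k-1)) ((1+r)^k) * S"
      and B'e: "\<forall>\<phi>. test_fun r \<phi> \<longrightarrow> (LINT x|?M. u x * deriv \<phi> x) = - (LINT x|?M. (F x + B' x) * \<phi> x)"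
      using lower_iter[OF r \<theta> I\<theta> ui Fi SF M\<theta>, of "k-1" "(1+r)^k" G] k1 c0 Gm Gb' red
      unfolding st_def by auto
    have LA: "memLp p r (\<lambda>x. F x + B' x) \<and> Lp_norm p r (\<lambda>x. F x + B' x) \<le> 4 * Lp_norm p r F + 4 * (1 + r) * (Cst * S)"
      by (rule Lp_add_bdd[OF r p mF[folded F_def] B'm]) (use B'b in \<open>simp add: Cst_def\<close>)
    show "\<exists>g. memLp p r g \<and>
       (\<forall>\<phi>. test_fun r \<phi> \<longrightarrow>
          - (LINT x|lebesgue_on {0..r}. u x * deriv \<phi> x) = (LINT x|lebesgue_on {0..r}. g x * \<phi> x)) \<and>
       Lp_norm p r g \<le> N * Lp_norm 1 r u + N * Lp_norm p r (f (k - 1))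
                        + N * (\<Sum>j<k - 1. Lp_norm 1 r (f j))"
    proof (intro exI[of _ "\<lambda>x. F x + B' x"] conjI allI impI)
      show "memLp p r (\<lambda>x. F x + B' x)" using LA by blast
      fix \<phi> assume "test_fun r \<phi>"
      then show "- (LINT x|?M. u x * deriv \<phi> x) = (LINT x|?M. (F x + B' x) * \<phi> x)"
        using B'e by simp
    next
      let ?nF = "Lp_norm p r F"
      let ?nu = "Lp_norm 1 r u"
      let ?nT = "\<Sum>j<k - 1. Lp_norm 1 r (f j)"
      have nF0: "0 \<le> ?nF" by (rule Lp_norm_nonneg[OF r])
      have nu: "?nu = (LINT x|?M. \<bar>u x\<bar>)" by (rule Lp_norm_1)
      have nT: "?nT = T" unfolding T_def by (simp add: Lp_norm_1)
      have LF: "(LINT x|?M. \<bar>F x\<bar>) \<le> (1 + r) * ?nF" by (rule L1_le_Lp[OF r p mF[folded F_def]])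
      have "S \<le> (1 + r) * ?nF + ?nu + ?nT" unfolding S_def using LF nu nT by linarith
      then have "4 * (1 + r) * (Cst * S) \<le> 4 * (1 + r) * (Cst * ((1 + r) * ?nF + ?nu + ?nT))"
        using C0 r by (intro mult_left_mono) auto
      also have "\<dots> = 4 * (1+r)^2 * Cst * ?nF + 4 * (1 + r) * Cst * ?nu + 4 * (1 + r) * Cst * ?nT"
        by (simp add: algebra_simps power2_eq_square)
      finally have A1: "4 * (1 + r) * (Cst * S) \<le> 4 * (1+r)^2 * Cst * ?nF + 4 * (1 + r) * Cst * ?nu + 4 * (1 + r) * Cst * ?nT" .
      have nu0: "0 \<le> ?nu" by (rule Lp_norm_nonneg[OF r])
      have nT0: "0 \<le> ?nT" using nT T0 by simp
      have cN: "4 * (1 + r) * Cst \<le> N"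
      proof -
        have "(1 + r) \<le> (1+r)^2" using r by (simp add: power2_eq_square)
        then have "4 * (1 + r) * Cst \<le> 4 * (1+r)^2 * Cst" using C0 by (intro mult_right_mono) auto
        then show ?thesis unfolding N_def by simp
      qed
      have "Lp_norm p r (\<lambda>x. F x + B' x) \<le> 4 * ?nF + 4 * (1 + r) * (Cst * S)" using LA by blast
      also have "\<dots> \<le> N * ?nF + 4 * (1 + r) * Cst * ?nu + 4 * (1 + r) * Cst * ?nT"
        using A1 unfolding N_def by (simp add: algebra_simps)
      also have "\<dots> \<le> N * ?nF + N * ?nu + N * ?nT"
        using cN nu0 nT0 by (intro add_mono mult_right_mono order_refl) auto
      finally show "Lp_norm p r (\<lambda>x. F x + B' x) \<le> N * ?nu + N * Lp_norm p r (f (k - 1)) + N * ?nT"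
        unfolding F_def by simp
    qed
  qed
qed


end
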